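(* Under the standing setup, assume $\mathcal S=\mathcal S_G$. Then for any optimal solution $(\chi',q)$ to Problem (D) there also exists an optimal solution $(\chi,q)$ to Problem (D) (with the same $q$) satisfying $\chi\in\mathrm{Lin}(\mathrm{Chn}_{\tilde{\mathcal V}})$.
   Context: Standing setup. All Hilbert spaces are finite-dimensional complex. Fix an integer $T\ge1$ and systems $\mathcal V_1,\dots,\mathcal V_T,\mathcal W_1,\dots,\mathcal W_T$; set $\mathcal W_0:=\mathbb C$ and $\tilde{\mathcal V}:=\mathcal W_T\otimes\mathcal V_T\otimes\cdots\otimes\mathcal W_1\otimes\mathcal V_1$. For a system $\mathcal X$, $N_{\mathcal X}$ is its dimension, $I_{\mathcal X}$ its identity, $\mathrm{Her}_{\mathcal X}$ the real Hilbert space of Hermitian operators on $\mathcal X$ with inner product $\langle X,Y\rangle=\mathrm{Tr}(XY)$, and $\mathrm{Pos}_{\mathcal X}$ the set of positive semidefinite operators; $X\ge Y$ means $X-Y$ is positive semidefinite; $\mathrm{Tr}_{\mathcal X}$ is the partial trace over $\mathcal X$. For a subset $A$ of a real vector space, $\mathrm{Lin}(A)$ is its real linear span and $\overline A$ its closure. $\mathcal I_n:=\{0,\dots,n-1\}$. Combs: $\mathrm{Chn}_{\tilde{\mathcal V}}$ is the set of $c\in\mathrm{Pos}_{\tilde{\mathcal V}}$ for which there exist $c_t\in\mathrm{Pos}_{\mathcal W_t\otimes\mathcal V_t\otimes\cdots\otimes\mathcal W_1\otimes\mathcal V_1}$ ($t=1,\dots,T$) with $c_T=c$, $\mathrm{Tr}_{\mathcal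 W_t}c_t=I_{\mathcal V_t}\otimes c_{t-1}$ for $2\le t\le T$, and $\mathrm{Tr}_{\mathcal W_1}c_1=I_{\mathcal V_1}$. $\mathcal S_G$ is the set of operators $I_{\mathcal W_T}\otimes\tau_T$ where $\tau_t\in\mathrm{Pos}_{\mathcal V_t\otimes\mathcal W_{t-1}\otimes\mathcal V_{t-1}\otimes\cdots\otimes\mathcal W_1\otimes\mathcal V_1}$ ($t=1,\dots,T$) satisfy $\mathrm{Tr}\,\tau_1=1$ and $\mathrm{Tr}_{\mathcal V_t}\tau_t=I_{\mathcal W_{t-1}}\otimes\tau_{t-1}$ for $2\le t\le T$. Fix an integer $M\ge2$; $\mathcal C_G:=\mathrm{Pos}_{\tilde{\mathcal V}}^M$ and the set of (all) testers is $\mathcal T_G:=\{\Phi=\{\Phi_m\}_{m=0}^{M-1}\in\mathcal C_G:\sum_m\Phi_m\in\mathcal S_G\}$. Problem data: an integer $J\ge0$, $c_m,a_{j,m}\in\mathrm{Her}_{\tilde{\mathcal V}}$ and $b_j\in\mathbb R$ ($m\in\mathcal I_M$, $j\in\mathcal I_J$); $\eta_j(\Phi):=\sum_m\langle\Phi_m,a_{j,m}\rangle-b_j$ and $P(\Phi):=\sum_m\langle\Phi_m,c_m\rangle$. $\mathcal T$ is a nonempty convex subset of $\mathcal T_G$, $\mathsf P:=\{\Phi\in\mathcal T:\eta_j(\Phi)\le0\ \forall j\in\mathcal I_J\}$, and it is assumed that $\overline{\mathsf P}=\{\Phi\in\overline{\mathcal T}:\eta_j(\Phi)\le0\ \forall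 j\}$. $\mathcal C\subseteq\mathcal C_G$ is a closed convex cone and $\mathcal S\subseteq\mathcal S_G$ a closed convex set with $\overline{\mathcal T}=\{\Phi\in\mathcal C:\sum_m\Phi_m\in\mathcal S\}$. Problem (P): maximize $P(\Phi)$ subject to $\Phi\in\mathsf P$; its optimal value is $\sup_{\Phi\in\mathsf P}P(\Phi)$ ($-\infty$ if $\mathsf P=\emptyset$); an optimal solution is a $\Phi\in\mathsf P$ attaining it. Dual: $\mathcal C^*:=\{\{y_m\}_{m}\in\mathrm{Her}_{\tilde{\mathcal V}}^M:\sum_m\langle\Phi_m,y_m\rangle\ge0\ \forall\Phi\in\mathcal C\}$; $\lambda_{\mathcal S}(\chi):=\sup_{\varphi\in\mathcal S}\langle\varphi,\chi\rangle$; $z_m(q):=c_m-\sum_jq_ja_{j,m}$ for $q=\{q_j\}\in\mathbb R_+^J$; $\mathsf D:=\{(\chi,q)\in\mathrm{Her}_{\tilde{\mathcal V}}\times\mathbb R_+^J:\{\chi-z_m(q)\}_{m}\in\mathcal C^*\}$; $D_{\mathcal S}(\chi,q):=\lambda_{\mathcal S}(\chi)+\sum_jq_jb_j$. Problem (D): minimize $D_{\mathcal S}(\chi,q)$ over $(\chi,q)\in\mathsf D$; its optimal value is the infimum ($+\infty$ if $\mathsf D=\emptyset$); an optimal solution attains it. *)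

theory Defs
  imports "HOL-Analysis.Analysis"
begin

text \<open>Operators on a composite system with factor dimensions ds (leftmost factor first)
  are represented as matrices indexed by multi-indices (lists), required to vanish
  outside the computational basis.\<close>

type_synonym op = "nat list \<Rightarrow> nat list \<Rightarrow> complex"
type_synonym tup = "nat \<Rightarrow> op"

definition basis :: "nat list \<Rightarrow> nat list set" where
  "basis ds = {a. length a = length ds \<and> (\<forall>i<length ds. a ! i < ds ! i)}"

definition is_op :: "nat list \<Rightarrow> op \<Rightarrow> bool" where
  "is_op ds X \<longleftrightarrow> (\<forall>a b. a \<notin> basis ds \<or> b \<notin> basis ds \<longrightarrow> X a b = 0)"

definition herm :: "nat list \<Rightarrow> op \<Rightarrow> bool" where
  "herm ds X \<longleftrightarrow> is_op ds X \<and> (\<forall>a b. X a b = cnj (X b a))"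

definition psd :: "nat list \<Rightarrow> op \<Rightarrow> bool" where
  "psd ds X \<longleftrightarrow> herm ds X \<and>
     (\<forall>v :: nat list \<Rightarrow> complex.
        0 \<le> Re (\<Sum>a\<in>basis ds. \<Sum>b\<in>basis ds. cnj (v a) * X a b * v b))"

definition ptr_head :: "nat \<Rightarrow> op \<Rightarrow> op" where
  "ptr_head d X = (\<lambda>a b. \<Sum>i<d. X (i # a) (i # b))"

text \<open>Tensoring with the identity on a new leftmost factor of dimension d.\<close>
definition idt :: "nat \<Rightarrow> op \<Rightarrow> op" where
  "idt d X = (\<lambda>a b. case a of [] \<Rightarrow> 0 | i # a' \<Rightarrow>
                 (case b of [] \<Rightarrow> 0 | j # b' \<Rightarrow> if i = j \<and> i < d then X a' b' else 0))"

text \<open>The identity on the trivial system \<open>\<complex>\<close> (no factors).\<close>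
definition scalar1 :: op where
  "scalar1 = (\<lambda>a b. if a = [] \<and> b = [] then 1 else 0)"

definition trace :: "nat list \<Rightarrow> op \<Rightarrow> complex" where
  "trace ds X = (\<Sum>a\<in>basis ds. X a a)"

text \<open>Hilbert-Schmidt inner product \<open>Tr(XY)\<close> (real on Hermitian operators).\<close>
definition hs :: "nat list \<Rightarrow> op \<Rightarrow> op \<Rightarrow> real" where
  "hs ds X Y = Re (\<Sum>a\<in>basis ds. \<Sum>b\<in>basis ds. X a b * Y b a)"

text \<open>Dimensions of \<open>W_t \<otimes> V_t \<otimes> \<dots> \<otimes> W_1 \<otimes> V_1\<close>.\<close>
fun Ld :: "(nat \<Rightarrow> nat) \<Rightarrow> (nat \<Rightarrow> nat) \<Rightarrow> nat \<Rightarrow> nat list" where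
  "Ld w v 0 = []"
| "Ld w v (Suc t) = w (Suc t) # v (Suc t) # Ld w v t"

text \<open>Dimensions of \<open>V_t \<otimes> W_{t-1} \<otimes> V_{t-1} \<otimes> \<dots> \<otimes> W_1 \<otimes> V_1\<close> (for \<open>t \<ge> 1\<close>).\<close>
definition Td :: "(nat \<Rightarrow> nat) \<Rightarrow> (nat \<Rightarrow> nat) \<Rightarrow> nat \<Rightarrow> nat list" where
  "Td w v t = v t # Ld w v (t - 1)"

definition Chn :: "(nat \<Rightarrow> nat) \<Rightarrow> (nat \<Rightarrow> nat) \<Rightarrow> nat \<Rightarrow> op set" where
  "Chn w v T = {c. psd (Ld w v T) c \<and>
     (\<exists>cs :: nat \<Rightarrow> op. cs T = c \<and>
        (\<forall>t\<in>{1..T}. psd (Ld w v t) (cs t)) \<and>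
        (\<forall>t\<in>{2..T}. ptr_head (w t) (cs t) = idt (v t) (cs (t - 1))) \<and>
        ptr_head (w 1) (cs 1) = idt (v 1) scalar1)}"

definition SG :: "(nat \<Rightarrow> nat) \<Rightarrow> (nat \<Rightarrow> nat) \<Rightarrow> nat \<Rightarrow> op set" where
  "SG w v T = {idt (w T) (\<tau> T) | \<tau> :: nat \<Rightarrow> op.
     (\<forall>t\<in>{1..T}. psd (Td w v t) (\<tau> t)) \<and>
     trace (Td w v 1) (\<tau> 1) = 1 \<and>
     (\<forall>t\<in>{2..T}. ptr_head (v t) (\<tau> t) = idt (w (t - 1)) (\<tau> (t - 1)))}"

text \<open>M-tuples of operators: components with index \<open>\<ge> M\<close> are zero.\<close>
definition CG :: "(nat \<Rightarrow> nat) \<Rightarrow> (nat \<Rightarrow> nat) \<Rightarrow> nat \<Rightarrow> nat \<Rightarrow> tup set" where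
  "CG w v T M = {\<Phi>. (\<forall>m<M. psd (Ld w v T) (\<Phi> m)) \<and> (\<forall>m\<ge>M. \<Phi> m = (\<lambda>_ _. 0))}"

definition opsum :: "nat \<Rightarrow> tup \<Rightarrow> op" where
  "opsum M \<Phi> = (\<lambda>a b. \<Sum>m<M. \<Phi> m a b)"

definition TG :: "(nat \<Rightarrow> nat) \<Rightarrow> (nat \<Rightarrow> nat) \<Rightarrow> nat \<Rightarrow> nat \<Rightarrow> tup set" where
  "TG w v T M = {\<Phi> \<in> CG w v T M. opsum M \<Phi> \<in> SG w v T}"

definition tinner :: "nat list \<Rightarrow> nat \<Rightarrow> tup \<Rightarrow> tup \<Rightarrow> real" where
  "tinner ds M \<Phi> Y = (\<Sum>m<M. hs ds (\<Phi> m) (Y m))"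

definition convex_tup :: "tup set \<Rightarrow> bool" where
  "convex_tup A \<longleftrightarrow> (\<forall>x\<in>A. \<forall>y\<in>A. \<forall>u::real. 0 \<le> u \<and> u \<le> 1 \<longrightarrow>
      (\<lambda>m a b. of_real u * x m a b + of_real (1 - u) * y m a b) \<in> A)"

definition cone_tup :: "tup set \<Rightarrow> bool" where
  "cone_tup A \<longleftrightarrow> (\<forall>x\<in>A. \<forall>r::real. 0 \<le> r \<longrightarrow> (\<lambda>m a b. of_real r * x m a b) \<in> A)"

definition lin_span :: "op set \<Rightarrow> op set" where
  "lin_span A = {(\<lambda>a b. \<Sum>c\<in>F. of_real (r c) * c a b) | F r. finite F \<and> F \<subseteq> A}"

definition dual_cone :: "nat list \<Rightarrow> nat \<Rightarrow> tup set \<Rightarrow> tup set" where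
  "dual_cone ds M C = {y. (\<forall>m<M. herm ds (y m)) \<and> (\<forall>m\<ge>M. y m = (\<lambda>_ _. 0)) \<and>
      (\<forall>\<Phi>\<in>C. 0 \<le> tinner ds M \<Phi> y)}"

definition lamS :: "nat list \<Rightarrow> op set \<Rightarrow> op \<Rightarrow> real" where
  "lamS ds S chi = Sup ((\<lambda>\<phi>. hs ds \<phi> chi) ` S)"

definition zq :: "nat \<Rightarrow> tup \<Rightarrow> (nat \<Rightarrow> tup) \<Rightarrow> (nat \<Rightarrow> real) \<Rightarrow> nat \<Rightarrow> op" where
  "zq J c a q m = (\<lambda>x y. c m x y - (\<Sum>j<J. of_real (q j) * a j m x y))"

definition Dset :: "nat list \<Rightarrow> nat \<Rightarrow> nat \<Rightarrow> tup \<Rightarrow> (nat \<Rightarrow> tup) \<Rightarrow> tup set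
    \<Rightarrow> (op \<times> (nat \<Rightarrow> real)) set" where
  "Dset ds M J c a C = {(chi, q). herm ds chi \<and> (\<forall>j<J. 0 \<le> q j) \<and> (\<forall>j\<ge>J. q j = 0) \<and>
      (\<lambda>m. if m < M then (\<lambda>x y. chi x y - zq J c a q m x y) else (\<lambda>_ _. 0))
        \<in> dual_cone ds M C}"

definition DS :: "nat list \<Rightarrow> op set \<Rightarrow> nat \<Rightarrow> (nat \<Rightarrow> real) \<Rightarrow> op \<Rightarrow> (nat \<Rightarrow> real) \<Rightarrow> real" where
  "DS ds S J b chi q = lamS ds S chi + (\<Sum>j<J. q j * b j)"

definition opt_D :: "nat list \<Rightarrow> nat \<Rightarrow> nat \<Rightarrow> tup \<Rightarrow> (nat \<Rightarrow> tup) \<Rightarrow> (nat \<Rightarrow> real)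
    \<Rightarrow> tup set \<Rightarrow> op set \<Rightarrow> op \<times> (nat \<Rightarrow> real) \<Rightarrow> bool" where
  "opt_D ds M J c a b C S p \<longleftrightarrow> p \<in> Dset ds M J c a C \<and>
     (\<forall>p'\<in>Dset ds M J c a C. DS ds S J b (fst p) (snd p) \<le> DS ds S J b (fst p') (snd p'))"

end

theory Submission
  imports Defs
begin


definition zop :: op where "zop = (\<lambda>_ _. 0)"
definition oadd :: "op \<Rightarrow> op \<Rightarrow> op" where "oadd X Y = (\<lambda>a b. X a b + Y a b)"
definition osub :: "op \<Rightarrow> op \<Rightarrow> op" where "osub X Y = (\<lambda>a b. X a b - Y a b)"
definition osc :: "real \<Rightarrow> op \<Rightarrow> op" where "osc r X = (\<lambda>a b. complex_of_real r * X a b)"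
definition quad :: "nat list \<Rightarrow> op \<Rightarrow> (nat list \<Rightarrow> complex) \<Rightarrow> complex" where
  "quad ds X u = (\<Sum>a\<in>basis ds. \<Sum>b\<in>basis ds. cnj (u a) * X a b * u b)"

lemma zop_app[simp]: "zop a b = 0" by (simp add: zop_def)
lemma oadd_app[simp]: "oadd X Y a b = X a b + Y a b" by (simp add: oadd_def)
lemma osub_app[simp]: "osub X Y a b = X a b - Y a b" by (simp add: osub_def)
lemma osc_app[simp]: "osc r X a b = complex_of_real r * X a b" by (simp add: osc_def)

lemma basis_Nil[simp]: "basis [] = {[]}"
  by (auto simp: basis_def)

lemma Cons_in_basis[simp]: "(i # a \<in> basis (d # ds)) \<longleftrightarrow> i < d \<and> a \<in> basis ds"
  by (auto simp: basis_def nth_Cons split: nat.splits)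

lemma Nil_notin_basis_Cons[simp]: "[] \<notin> basis (d # ds)"
  by (auto simp: basis_def)

lemma basis_Cons: "basis (d # ds) = (\<lambda>(i,a). i # a) ` ({..<d} \<times> basis ds)"
proof (rule set_eqI)
  fix x show "x \<in> basis (d # ds) \<longleftrightarrow> x \<in> (\<lambda>(i,a). i # a) ` ({..<d} \<times> basis ds)"
    by (cases x) auto
qed

lemma finite_basis[simp]: "finite (basis ds)"
proof (induction ds)
  case Nil then show ?case by simp
next
  case (Cons d ds) then show ?case by (simp add: basis_Cons)
qed

lemma sum_basis_Cons: "(\<Sum>x\<in>basis (d # ds). f x) = (\<Sum>i<d. \<Sum>a\<in>basis ds. f (i # a))"
proof -
  have inj: "inj_on (\<lambda>(i,a). i # a) ({..<d} \<times> basis ds)"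
    by (auto simp: inj_on_def)
  have "(\<Sum>x\<in>basis (d # ds). f x) = (\<Sum>p\<in>{..<d} \<times> basis ds. f ((\<lambda>(i,a). i # a) p))"
    unfolding basis_Cons by (rule sum.reindex[OF inj, unfolded comp_def])
  also have "\<dots> = (\<Sum>i<d. \<Sum>a\<in>basis ds. f (i # a))"
    by (simp add: sum.cartesian_product split_def)
  finally show ?thesis .
qed

lemma hs_sym: "hs ds X Y = hs ds Y X"
  unfolding hs_def by (subst sum.swap) (simp add: mult.commute)

lemma hs_add2: "hs ds X (oadd Y Z) = hs ds X Y + hs ds X Z"
  unfolding hs_def by (simp add: distrib_left sum.distrib)
lemma hs_sub2: "hs ds X (osub Y Z) = hs ds X Y - hs ds X Z"
  unfolding hs_def by (simp add: right_diff_distrib sum_subtractf)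
lemma hs_sc2: "hs ds X (osc r Y) = r * hs ds X Y"
proof -
  have "(\<Sum>a\<in>basis ds. \<Sum>b\<in>basis ds. X a b * (complex_of_real r * Y b a))
      = complex_of_real r * (\<Sum>a\<in>basis ds. \<Sum>b\<in>basis ds. X a b * Y b a)"
    by (simp add: sum_distrib_left mult_ac)
  then show ?thesis unfolding hs_def by simp
qed
lemma hs_zop2[simp]: "hs ds X zop = 0" by (simp add: hs_def)
lemma hs_add1: "hs ds (oadd Y Z) X = hs ds Y X + hs ds Z X"
  by (simp add: hs_sym[of ds _ X] hs_add2)
lemma hs_sub1: "hs ds (osub Y Z) X = hs ds Y X - hs ds Z X"
  by (simp add: hs_sym[of ds _ X] hs_sub2)
lemma hs_sc1: "hs ds (osc r Y) X = r * hs ds Y X"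
  by (simp add: hs_sym[of ds _ X] hs_sc2)
lemma hs_zop1[simp]: "hs ds zop X = 0" by (simp add: hs_def)

lemma idt_Cons: "idt d X (i # a) (j # b) = (if i = j \<and> i < d then X a b else 0)"
  by (simp add: idt_def)

lemma hs_idt: "hs (d # ds) (idt d A) B = hs ds A (ptr_head d B)"
proof -
  have "(\<Sum>x\<in>basis (d # ds). \<Sum>y\<in>basis (d # ds). idt d A x y * B y x)
      = (\<Sum>i<d. \<Sum>a\<in>basis ds. \<Sum>j<d. \<Sum>b\<in>basis ds. (if i = j \<and> i < d then A a b else 0) * B (j # b) (i # a))"
    by (simp add: sum_basis_Cons idt_Cons)
  also have "\<dots> = (\<Sum>i<d. \<Sum>a\<in>basis ds. \<Sum>b\<in>basis ds. A a b * B (i # b) (i # a))"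
  proof (rule sum.cong[OF refl], rule sum.cong[OF refl])
    fix i a assume "i \<in> {..<d}"
    have "(\<Sum>j<d. \<Sum>b\<in>basis ds. (if i = j \<and> i < d then A a b else 0) * B (j # b) (i # a))
        = (\<Sum>j<d. if j = i then (\<Sum>b\<in>basis ds. A a b * B (j # b) (i # a)) else 0)"
      using \<open>i \<in> {..<d}\<close> by (intro sum.cong) auto
    also have "\<dots> = (\<Sum>b\<in>basis ds. A a b * B (i # b) (i # a))"
      using \<open>i \<in> {..<d}\<close> by (simp add: sum.delta)
    finally show "(\<Sum>j<d. \<Sum>b\<in>basis ds. (if i = j \<and> i < d then A a b else 0) * B (j # b) (i # a))
        = (\<Sum>b\<in>basis ds. A a b * B (i # b) (i # a))" .
  qed
  also have "\<dots> = (\<Sum>a\<in>basis ds. \<Sum>b\<in>basis ds. A a b * ptr_head d B b a)"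
    unfolding ptr_head_def
    by (subst sum.swap) (simp add: sum_distrib_left sum.swap[of _ "{..<d}"])
  finally show ?thesis unfolding hs_def by simp
qed

lemma trace_idt: "trace (d # ds) (idt d X) = of_nat d * trace ds X"
  by (simp add: trace_def sum_basis_Cons idt_Cons)

lemma trace_ptr_head: "trace ds (ptr_head d X) = trace (d # ds) X"
  by (simp add: trace_def sum_basis_Cons ptr_head_def) (rule sum.swap)

lemma quad_idt: "quad (d # ds) (idt d A) u = (\<Sum>i<d. quad ds A (\<lambda>a. u (i # a)))"
proof -
  have "quad (d # ds) (idt d A) u
     = (\<Sum>i<d. \<Sum>a\<in>basis ds. \<Sum>j<d. \<Sum>b\<in>basis ds. cnj (u (i#a)) * (if i = j \<and> i < d then A a b else 0) * u (j # b))"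
    by (simp add: quad_def sum_basis_Cons idt_Cons)
  also have "\<dots> = (\<Sum>i<d. \<Sum>a\<in>basis ds. \<Sum>b\<in>basis ds. cnj (u (i#a)) * A a b * u (i # b))"
  proof (rule sum.cong[OF refl], rule sum.cong[OF refl])
    fix i a assume "i \<in> {..<d}"
    have "(\<Sum>j<d. \<Sum>b\<in>basis ds. cnj (u (i#a)) * (if i = j \<and> i < d then A a b else 0) * u (j # b))
        = (\<Sum>j<d. if j = i then (\<Sum>b\<in>basis ds. cnj (u (i#a)) * A a b * u (j # b)) else 0)"
      using \<open>i \<in> {..<d}\<close> by (intro sum.cong) auto
    also have "\<dots> = (\<Sum>b\<in>basis ds. cnj (u (i#a)) * A a b * u (i # b))"
      using \<open>i \<in> {..<d}\<close> by (simp add: sum.delta)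
    finally show "(\<Sum>j<d. \<Sum>b\<in>basis ds. cnj (u (i#a)) * (if i = j \<and> i < d then A a b else 0) * u (j # b))
        = (\<Sum>b\<in>basis ds. cnj (u (i#a)) * A a b * u (i # b))" .
  qed
  finally show ?thesis by (simp add: quad_def)
qed

definition ui :: "nat \<Rightarrow> (nat list \<Rightarrow> complex) \<Rightarrow> nat list \<Rightarrow> complex" where
  "ui i u x = (case x of [] \<Rightarrow> 0 | j # a \<Rightarrow> if j = i then u a else 0)"

lemma quad_ptr_head: "quad ds (ptr_head d X) u = (\<Sum>i<d. quad (d # ds) X (ui i u))"
proof -
  have "(\<Sum>i<d. quad (d # ds) X (ui i u))
     = (\<Sum>i<d. \<Sum>j<d. \<Sum>a\<in>basis ds. \<Sum>k<d. \<Sum>b\<in>basis ds. cnj (ui i u (j#a)) * X (j#a) (k#b) * ui i u (k#b))"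
    by (simp add: quad_def sum_basis_Cons)
  also have "\<dots> = (\<Sum>i<d. \<Sum>a\<in>basis ds. \<Sum>b\<in>basis ds. cnj (u a) * X (i#a) (i#b) * u b)"
  proof (rule sum.cong[OF refl])
    fix i assume i: "i \<in> {..<d}"
    have "(\<Sum>j<d. \<Sum>a\<in>basis ds. \<Sum>k<d. \<Sum>b\<in>basis ds. cnj (ui i u (j#a)) * X (j#a) (k#b) * ui i u (k#b))
       = (\<Sum>j<d. if j = i then (\<Sum>a\<in>basis ds. \<Sum>k<d. \<Sum>b\<in>basis ds. cnj (u a) * X (i#a) (k#b) * ui i u (k#b)) else 0)"
      by (intro sum.cong) (auto simp: ui_def)
    also have "\<dots> = (\<Sum>a\<in>basis ds. \<Sum>k<d. \<Sum>b\<in>basis ds. cnj (u a) * X (i#a) (k#b) * ui i u (k#b))"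
      using i by (simp add: sum.delta)
    also have "\<dots> = (\<Sum>a\<in>basis ds. \<Sum>k<d. if k = i then (\<Sum>b\<in>basis ds. cnj (u a) * X (i#a) (i#b) * u b) else 0)"
      by (intro sum.cong) (auto simp: ui_def)
    also have "\<dots> = (\<Sum>a\<in>basis ds. \<Sum>b\<in>basis ds. cnj (u a) * X (i#a) (i#b) * u b)"
      using i by (simp add: sum.delta)
    finally show "(\<Sum>j<d. \<Sum>a\<in>basis ds. \<Sum>k<d. \<Sum>b\<in>basis ds. cnj (ui i u (j#a)) * X (j#a) (k#b) * ui i u (k#b))
       = (\<Sum>a\<in>basis ds. \<Sum>b\<in>basis ds. cnj (u a) * X (i#a) (i#b) * u b)" .
  qed
  also have "\<dots> = quad ds (ptr_head d X) u"
    unfolding quad_def ptr_head_def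
    by (simp add: sum_distrib_left sum_distrib_right sum.swap[of _ "{..<d}"])
  finally show ?thesis by simp
qed


lemma psd_quad: "psd ds X \<Longrightarrow> 0 \<le> Re (quad ds X u)"
  by (simp add: psd_def quad_def)

lemma psd_iff_quad: "psd ds X \<longleftrightarrow> herm ds X \<and> (\<forall>u. 0 \<le> Re (quad ds X u))"
  by (simp add: psd_def quad_def)

lemma herm_is_op: "herm ds X \<Longrightarrow> is_op ds X" unfolding herm_def by blast
lemma psd_herm: "psd ds X \<Longrightarrow> herm ds X" by (simp add: psd_def)

lemma is_op_out: "is_op ds X \<Longrightarrow> a \<notin> basis ds \<or> b \<notin> basis ds \<Longrightarrow> X a b = 0"
  by (simp add: is_op_def)

lemma herm_cnj: "herm ds X \<Longrightarrow> X a b = cnj (X b a)" unfolding herm_def by blast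

lemma hermI: "is_op ds X \<Longrightarrow> (\<And>a b. X a b = cnj (X b a)) \<Longrightarrow> herm ds X"
  unfolding herm_def by blast
lemma herm_oadd: "herm ds X \<Longrightarrow> herm ds Y \<Longrightarrow> herm ds (oadd X Y)"
  apply (rule hermI)
  subgoal using herm_is_op[of ds X] herm_is_op[of ds Y] by (simp add: is_op_def)
  subgoal for a b using herm_cnj[of ds X a b] herm_cnj[of ds Y a b] by simp
  done
lemma herm_osub: "herm ds X \<Longrightarrow> herm ds Y \<Longrightarrow> herm ds (osub X Y)"
  apply (rule hermI)
  subgoal using herm_is_op[of ds X] herm_is_op[of ds Y] by (simp add: is_op_def)
  subgoal for a b using herm_cnj[of ds X a b] herm_cnj[of ds Y a b] by simp
  done
lemma herm_osc: "herm ds X \<Longrightarrow> herm ds (osc r X)"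
  apply (rule hermI)
  subgoal using herm_is_op[of ds X] by (simp add: is_op_def)
  subgoal for a b using herm_cnj[of ds X a b] by simp
  done
lemma herm_zop: "herm ds zop"
  by (rule hermI) (auto simp: is_op_def)

lemma idt_nz: "idt d X a b \<noteq> 0 \<Longrightarrow> \<exists>i a' b'. a = i # a' \<and> b = i # b' \<and> i < d \<and> idt d X a b = X a' b'"
  unfolding idt_def by (cases a; cases b) (auto split: if_splits)

lemma is_op_idt: "is_op ds A \<Longrightarrow> is_op (d # ds) (idt d A)"
  unfolding is_op_def
proof (intro allI impI)
  fix a b assume A: "\<forall>a b. a \<notin> basis ds \<or> b \<notin> basis ds \<longrightarrow> A a b = 0"
    and ab: "a \<notin> basis (d # ds) \<or> b \<notin> basis (d # ds)"
  show "idt d A a b = 0"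
  proof (rule ccontr)
    assume "idt d A a b \<noteq> 0"
    then obtain i a' b' where "a = i # a'" "b = i # b'" "i < d" "idt d A a b = A a' b'"
      using idt_nz by blast
    then show False using A ab \<open>idt d A a b \<noteq> 0\<close> by auto
  qed
qed

lemma herm_idt: "herm ds A \<Longrightarrow> herm (d # ds) (idt d A)"
  unfolding herm_def
proof (intro conjI allI)
  assume h: "is_op ds A \<and> (\<forall>a b. A a b = cnj (A b a))"
  then show "is_op (d # ds) (idt d A)" using is_op_idt by blast
  fix a b show "idt d A a b = cnj (idt d A b a)"
  proof -
    have hc: "\<And>x y. A x y = cnj (A y x)" using h by blast
    show ?thesis unfolding idt_def by (cases a; cases b) (auto simp del: complex_cnj_cancel_iff intro: hc)
  qed
qed

lemma is_op_ptr_head: "is_op (d # ds) X \<Longrightarrow> is_op ds (ptr_head d X)"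
  unfolding is_op_def
proof (intro allI impI)
  fix a b assume X: "\<forall>a b. a \<notin> basis (d # ds) \<or> b \<notin> basis (d # ds) \<longrightarrow> X a b = 0"
    and ab: "a \<notin> basis ds \<or> b \<notin> basis ds"
  have "\<And>i. X (i # a) (i # b) = 0"
  proof -
    fix i have "i # a \<notin> basis (d # ds) \<or> i # b \<notin> basis (d # ds)" using ab by simp
    then show "X (i # a) (i # b) = 0" using X by blast
  qed
  then show "ptr_head d X a b = 0" by (simp add: ptr_head_def)
qed
lemma herm_ptr_head: "herm (d # ds) X \<Longrightarrow> herm ds (ptr_head d X)"
  apply (rule hermI)
  subgoal using is_op_ptr_head[of d ds X] herm_is_op by blast
  subgoal for a b
  proof -
    assume h: "herm (d # ds) X"
    have "\<And>i. X (i # a) (i # b) = cnj (X (i # b) (i # a))" using herm_cnj[OF h] by blast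
    then show ?thesis unfolding ptr_head_def by (simp add: cnj_sum)
  qed
  done

lemma quad_oadd: "quad ds (oadd X Y) u = quad ds X u + quad ds Y u"
  by (simp add: quad_def distrib_left distrib_right sum.distrib)
lemma quad_osub: "quad ds (osub X Y) u = quad ds X u - quad ds Y u"
  by (simp add: quad_def left_diff_distrib right_diff_distrib sum_subtractf)
lemma quad_osc: "quad ds (osc r X) u = complex_of_real r * quad ds X u"
  by (simp add: quad_def sum_distrib_left mult_ac)

lemma psd_oadd: "psd ds X \<Longrightarrow> psd ds Y \<Longrightarrow> psd ds (oadd X Y)"
  by (simp add: psd_iff_quad herm_oadd quad_oadd)
lemma psd_osc: "psd ds X \<Longrightarrow> 0 \<le> r \<Longrightarrow> psd ds (osc r X)"
  by (simp add: psd_iff_quad herm_osc quad_osc)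
lemma psd_zop: "psd ds zop"
  by (simp add: psd_iff_quad herm_zop quad_def)

lemma psd_idt: "psd ds A \<Longrightarrow> psd (d # ds) (idt d A)"
  by (simp add: psd_iff_quad herm_idt quad_idt sum_nonneg)

lemma psd_idt_rev:
  assumes "psd (d # ds) (idt d A)" "1 \<le> d"
  shows "psd ds A"
proof -
  have H: "herm (d # ds) (idt d A)" using assms psd_herm by auto
  have hA: "herm ds A"
    unfolding herm_def is_op_def
  proof (intro conjI allI impI)
    fix a b assume "a \<notin> basis ds \<or> b \<notin> basis ds"
    then have "0 # a \<notin> basis (d # ds) \<or> 0 # b \<notin> basis (d # ds)" by auto
    then have "idt d A (0 # a) (0 # b) = 0" using H herm_is_op is_op_out by blast
    then show "A a b = 0" using assms(2) by (simp add: idt_Cons)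
  next
    fix a b
    have "idt d A (0 # a) (0 # b) = cnj (idt d A (0 # b) (0 # a))" using H herm_cnj by blast
    then show "A a b = cnj (A b a)" using assms(2) by (simp add: idt_Cons)
  qed
  have "0 \<le> Re (quad ds A u)" for u
  proof -
    define u' where "u' = ui 0 u"
    have "quad (d # ds) (idt d A) u' = (\<Sum>i<d. quad ds A (\<lambda>a. u' (i # a)))" by (rule quad_idt)
    also have "\<dots> = (\<Sum>i<d. if i = 0 then quad ds A u else 0)"
      by (intro sum.cong) (auto simp: u'_def ui_def quad_def)
    also have "\<dots> = quad ds A u" using assms(2) by (simp add: sum.delta)
    finally show ?thesis using psd_quad[OF assms(1), of u'] by simp
  qed
  then show ?thesis using hA by (simp add: psd_iff_quad)
qed

lemma psd_ptr_head: "psd (d # ds) X \<Longrightarrow> psd ds (ptr_head d X)"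
  by (simp add: psd_iff_quad herm_ptr_head quad_ptr_head sum_nonneg)

definition bil :: "nat list \<Rightarrow> op \<Rightarrow> (nat list \<Rightarrow> complex) \<Rightarrow> (nat list \<Rightarrow> complex) \<Rightarrow> complex" where
  "bil ds X u v = (\<Sum>a\<in>basis ds. \<Sum>b\<in>basis ds. cnj (u a) * X a b * v b)"

lemma quad_bil: "quad ds X u = bil ds X u u" by (simp add: quad_def bil_def)

lemma bil_add_left: "bil ds X (\<lambda>x. u x + e x) v = bil ds X u v + bil ds X e v"
  by (simp add: bil_def distrib_left distrib_right sum.distrib)
lemma bil_add_right: "bil ds X u (\<lambda>x. v x + e x) = bil ds X u v + bil ds X u e"
  by (simp add: bil_def distrib_left distrib_right sum.distrib)

lemma bil_delta_left: "a0 \<in> basis ds \<Longrightarrow>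
   bil ds X (\<lambda>x. if x = a0 then c else 0) v = cnj c * (\<Sum>b\<in>basis ds. X a0 b * v b)"
proof -
  assume a0: "a0 \<in> basis ds"
  have "bil ds X (\<lambda>x. if x = a0 then c else 0) v
      = (\<Sum>a\<in>basis ds. if a = a0 then (\<Sum>b\<in>basis ds. cnj c * X a0 b * v b) else 0)"
    unfolding bil_def by (intro sum.cong) auto
  also have "\<dots> = (\<Sum>b\<in>basis ds. cnj c * X a0 b * v b)" using a0 by (simp add: sum.delta)
  finally show ?thesis by (simp add: sum_distrib_left mult_ac)
qed

lemma bil_delta_right: "a0 \<in> basis ds \<Longrightarrow>
   bil ds X u (\<lambda>x. if x = a0 then c else 0) = c * (\<Sum>a\<in>basis ds. cnj (u a) * X a a0)"
proof -
  assume a0: "a0 \<in> basis ds"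
  have "bil ds X u (\<lambda>x. if x = a0 then c else 0)
      = (\<Sum>a\<in>basis ds. \<Sum>b\<in>basis ds. if b = a0 then cnj (u a) * X a a0 * c else 0)"
    unfolding bil_def by (intro sum.cong) auto
  also have "\<dots> = (\<Sum>a\<in>basis ds. cnj (u a) * X a a0 * c)" using a0 by (simp add: sum.delta)
  finally show ?thesis by (simp add: sum_distrib_left mult_ac)
qed

lemma bil_delta_delta: "a0 \<in> basis ds \<Longrightarrow> b0 \<in> basis ds \<Longrightarrow>
   bil ds X (\<lambda>x. if x = a0 then c else 0) (\<lambda>x. if x = b0 then e else 0) = cnj c * X a0 b0 * e"
proof -
  assume a0: "a0 \<in> basis ds" and b0: "b0 \<in> basis ds"
  have "(\<Sum>b\<in>basis ds. X a0 b * (if b = b0 then e else 0)) = (\<Sum>b\<in>basis ds. if b = b0 then X a0 b0 * e else 0)"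
    by (intro sum.cong) auto
  also have "\<dots> = X a0 b0 * e" using b0 by (simp add: sum.delta)
  finally show ?thesis using bil_delta_left[OF a0] by (simp add: mult_ac)
qed

lemma quad_delta: "a0 \<in> basis ds \<Longrightarrow> quad ds X (\<lambda>x. if x = a0 then 1 else 0) = X a0 a0"
  by (simp add: quad_bil bil_delta_delta)

lemma quad_two:
  assumes "a0 \<in> basis ds" "b0 \<in> basis ds"
  shows "quad ds X (\<lambda>x. (if x = a0 then c else 0) + (if x = b0 then e else 0))
     = cnj c * X a0 a0 * c + cnj c * X a0 b0 * e + cnj e * X b0 a0 * c + cnj e * X b0 b0 * e"
  using assms by (simp add: quad_bil bil_add_left bil_add_right bil_delta_delta)

lemma herm_diag_Im: "herm ds X \<Longrightarrow> Im (X a a) = 0"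
proof -
  assume h: "herm ds X"
  have "X a a = cnj (X a a)" using herm_cnj[OF h] .
  then have "Im (X a a) = Im (cnj (X a a))" by simp
  then show ?thesis by simp
qed

lemma herm_diag_real: "herm ds X \<Longrightarrow> X a a = complex_of_real (Re (X a a))"
  using herm_diag_Im[of ds X a] by (simp add: complex_eq_iff)

lemma psd_diag_nonneg: "psd ds X \<Longrightarrow> 0 \<le> Re (X a a)"
proof -
  assume p: "psd ds X"
  show ?thesis
  proof (cases "a \<in> basis ds")
    case True then show ?thesis using psd_quad[OF p, of "\<lambda>x. if x = a then 1 else 0"] quad_delta by simp
  next
    case False
    then have "X a a = 0" using is_op_out[OF herm_is_op[OF psd_herm[OF p]]] by blast
    then show ?thesis by simp
  qed
qed

lemma cnj_mult_self: "cnj z * z = complex_of_real ((cmod z)\<^sup>2)"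
  unfolding complex_norm_square by (rule mult.commute)

lemma psd_offdiag:
  assumes p: "psd ds X"
  shows "cmod (X a b) \<le> Re (X a a) + Re (X b b)"
proof (cases "a \<in> basis ds \<and> b \<in> basis ds")
  case False
  then have "X a b = 0" using p psd_herm herm_is_op is_op_out by blast
  then show ?thesis using psd_diag_nonneg[OF p] by simp
next
  case True
  show ?thesis
  proof (cases "a = b")
    case True
    have "cmod (X a a) = Re (X a a)"
      using psd_diag_nonneg[OF p, of a] herm_diag_real[OF psd_herm[OF p], of a]
      by (metis abs_of_nonneg norm_of_real)
    then show ?thesis using psd_diag_nonneg[OF p, of a] True by simp
  next
    case ne: False
    show ?thesis
    proof (cases "X a b = 0")
      case True then show ?thesis using psd_diag_nonneg[OF p] by simp
    next
      case nz: False
      define r where "r = cmod (X a b)"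
      have r0: "r > 0" using nz by (simp add: r_def)
      define e where "e = - X b a / complex_of_real r"
      have hb: "X b a = cnj (X a b)" using herm_cnj[OF psd_herm[OF p]] by blast
      have q: "quad ds X (\<lambda>x. (if x = a then 1 else 0) + (if x = b then e else 0))
         = X a a + X a b * e + cnj e * X b a + cnj e * X b b * e"
        using quad_two[OF conjunct1[OF True] conjunct2[OF True], of X 1 e] by simp
      have e1: "X a b * e = - complex_of_real r"
      proof -
        have "X a b * e = - (X a b * cnj (X a b)) / complex_of_real r" by (simp add: e_def hb)
        also have "\<dots> = - complex_of_real (r\<^sup>2) / complex_of_real r"
          unfolding r_def complex_norm_square by simp
        also have "\<dots> = - complex_of_real r" using r0 by (simp add: power2_eq_square)
        finally show ?thesis .
      qed
      have e2: "cnj e * X b a = - complex_of_real r"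
      proof -
        have "cnj e * X b a = cnj (X a b * e)" by (simp add: hb)
        then show ?thesis using e1 by simp
      qed
      have ce: "cnj e * e = 1"
      proof -
        have "cmod e = cmod (X b a) / r" using r0 by (simp add: e_def norm_divide)
        also have "\<dots> = 1" using r0 by (simp add: hb r_def)
        finally have "cmod e = 1" .
        then show ?thesis by (simp add: cnj_mult_self)
      qed
      have e3: "cnj e * X b b * e = X b b" using ce by (simp add: mult_ac)
      have "0 \<le> Re (quad ds X (\<lambda>x. (if x = a then 1 else 0) + (if x = b then e else 0)))"
        by (rule psd_quad[OF p])
      then have "0 \<le> Re (X a a) - 2 * r + Re (X b b)"
        unfolding q e1 e2 e3 by simp
      then show ?thesis using psd_diag_nonneg[OF p, of a] psd_diag_nonneg[OF p, of b] r_def by simp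
    qed
  qed
qed

lemma psd_zero_row:
  assumes p: "psd ds X" and z: "X a a = 0"
  shows "X a b = 0"
proof (rule ccontr)
  assume nz: "X a b \<noteq> 0"
  have ab: "a \<in> basis ds" "b \<in> basis ds" using nz is_op_out[OF herm_is_op[OF psd_herm[OF p]]] by blast+
  have ne: "a \<noteq> b" using nz z by auto
  have hb: "X b a = cnj (X a b)" using herm_cnj[OF psd_herm[OF p]] by blast
  define r where "r = (cmod (X a b))\<^sup>2"
  have r0: "r > 0" using nz by (simp add: r_def)
  define s where "s = (Re (X b b) + 1) / r"
  define c where "c = - complex_of_real s * X a b"
  have q: "quad ds X (\<lambda>x. (if x = a then c else 0) + (if x = b then 1 else 0))
     = cnj c * X a a * c + cnj c * X a b + X b a * c + X b b"
    using quad_two[OF ab, of X c 1] by simp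
  have cc: "cnj (X a b) * X a b = complex_of_real r" unfolding r_def by (rule cnj_mult_self)
  have e1: "cnj c * X a b = - complex_of_real (s * r)"
  proof -
    have "cnj c * X a b = - complex_of_real s * (cnj (X a b) * X a b)" by (simp add: c_def)
    then show ?thesis unfolding cc by simp
  qed
  have e2: "X b a * c = - complex_of_real (s * r)"
  proof -
    have "X b a * c = - complex_of_real s * (cnj (X a b) * X a b)" by (simp add: c_def hb)
    then show ?thesis unfolding cc by simp
  qed
  have sr: "s * r = Re (X b b) + 1" using r0 by (simp add: s_def)
  have "0 \<le> Re (quad ds X (\<lambda>x. (if x = a then c else 0) + (if x = b then 1 else 0)))"
    by (rule psd_quad[OF p])
  then have "0 \<le> - 2 * (s * r) + Re (X b b)" unfolding q e1 e2 z by (simp add: mult.commute)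
  then show False using sr psd_diag_nonneg[OF p, of b] by simp
qed

lemma psd_trace_real: "psd ds X \<Longrightarrow> trace ds X = complex_of_real (Re (trace ds X))"
proof -
  assume p: "psd ds X"
  have "Im (trace ds X) = 0" unfolding trace_def using herm_diag_Im[OF psd_herm[OF p]] by (simp add: Im_sum)
  then show ?thesis by (simp add: complex_eq_iff)
qed

lemma psd_trace_nonneg: "psd ds X \<Longrightarrow> 0 \<le> Re (trace ds X)"
  unfolding trace_def by (simp add: Re_sum sum_nonneg psd_diag_nonneg)

lemma psd_diag_le_trace: "psd ds X \<Longrightarrow> a \<in> basis ds \<Longrightarrow> Re (X a a) \<le> Re (trace ds X)"
  unfolding trace_def Re_sum
  by (rule member_le_sum) (auto simp: psd_diag_nonneg)

lemma psd_entry_le_trace: "psd ds X \<Longrightarrow> cmod (X a b) \<le> 2 * Re (trace ds X)"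
proof -
  assume p: "psd ds X"
  show ?thesis
  proof (cases "a \<in> basis ds \<and> b \<in> basis ds")
    case True
    then show ?thesis using psd_offdiag[OF p, of a b] psd_diag_le_trace[OF p, of a] psd_diag_le_trace[OF p, of b]
      by simp
  next
    case False
    then have "X a b = 0" using p psd_herm herm_is_op is_op_out by blast
    then show ?thesis using psd_trace_nonneg[OF p] by simp
  qed
qed

lemma psd_trace0:
  assumes p: "psd ds X" and t: "Re (trace ds X) = 0"
  shows "X = zop"
proof -
  have d: "Re (X a a) = 0" if "a \<in> basis ds" for a
  proof -
    have "Re (trace ds X) = (\<Sum>a\<in>basis ds. Re (X a a))" by (simp add: trace_def Re_sum)
    then have "(\<Sum>a\<in>basis ds. Re (X a a)) = 0" using t by simp
    then show ?thesis using sum_nonneg_eq_0_iff[of "basis ds" "\<lambda>a. Re (X a a)"] psd_diag_nonneg[OF p] that by auto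
  qed
  have "X a b = 0" for a b
  proof (cases "a \<in> basis ds")
    case True
    then have "X a a = 0" using d herm_diag_real[OF psd_herm[OF p], of a] by simp
    then show ?thesis using psd_zero_row[OF p] by blast
  next
    case False then show ?thesis using p psd_herm herm_is_op is_op_out by blast
  qed
  then show ?thesis by (auto simp: zop_def)
qed


definition r1 :: "nat list \<Rightarrow> (nat list \<Rightarrow> complex) \<Rightarrow> op" where
  "r1 ds u = (\<lambda>a b. if a \<in> basis ds \<and> b \<in> basis ds then u a * cnj (u b) else 0)"

lemma psd_r1: "psd ds (r1 ds u)"
proof -
  have h: "herm ds (r1 ds u)"
    by (rule hermI) (auto simp: r1_def is_op_def)
  have "0 \<le> Re (quad ds (r1 ds u) v)" for v
  proof -
    have "quad ds (r1 ds u) v = (\<Sum>a\<in>basis ds. \<Sum>b\<in>basis ds. (cnj (v a) * u a) * (cnj (u b) * v b))"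
      unfolding quad_def r1_def by (intro sum.cong) (auto simp: mult_ac)
    also have "\<dots> = (\<Sum>a\<in>basis ds. cnj (v a) * u a) * (\<Sum>b\<in>basis ds. cnj (u b) * v b)"
      by (simp add: sum_product)
    also have "\<dots> = cnj (\<Sum>b\<in>basis ds. cnj (u b) * v b) * (\<Sum>b\<in>basis ds. cnj (u b) * v b)"
      by (simp add: cnj_sum mult.commute)
    finally show ?thesis unfolding cnj_mult_self by simp
  qed
  then show ?thesis using h by (simp add: psd_iff_quad)
qed

lemma hs_r1: "hs ds Q (r1 ds u) = Re (quad ds Q u)"
proof -
  have "(\<Sum>a\<in>basis ds. \<Sum>b\<in>basis ds. Q a b * r1 ds u b a) = quad ds Q u"
    unfolding quad_def r1_def by (intro sum.cong) (auto simp: mult_ac)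
  then show ?thesis by (simp add: hs_def)
qed

lemma psd_dualI:
  assumes "herm ds Q" "\<And>p. psd ds p \<Longrightarrow> 0 \<le> hs ds Q p"
  shows "psd ds Q"
  using assms psd_r1 hs_r1 by (simp add: psd_iff_quad) (metis)

lemma pairing_aux:
  assumes "finite K" and Q: "psd ds Q"
  shows "\<forall>P. K \<subseteq> basis ds \<longrightarrow> psd ds P \<longrightarrow> (\<forall>a b. a \<notin> K \<or> b \<notin> K \<longrightarrow> P a b = 0) \<longrightarrow> 0 \<le> hs ds P Q"
  using assms(1)
proof (induction K)
  case empty
  show ?case
  proof (intro allI impI)
    fix P assume "{} \<subseteq> basis ds" "psd ds P" and z: "\<forall>a b. a \<notin> {} \<or> b \<notin> {} \<longrightarrow> P a b = 0"
    then have "P = zop" by (auto simp: zop_def)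
    then show "0 \<le> hs ds P Q" by simp
  qed
next
  case (insert a0 K)
  show ?case
  proof (intro allI impI)
    fix P assume Kb: "insert a0 K \<subseteq> basis ds" and p: "psd ds P"
      and sup: "\<forall>a b. a \<notin> insert a0 K \<or> b \<notin> insert a0 K \<longrightarrow> P a b = 0"
    have a0b: "a0 \<in> basis ds" using Kb by auto
    have Kb': "K \<subseteq> basis ds" using Kb by auto
    have hP: "herm ds P" using psd_herm[OF p] .
    show "0 \<le> hs ds P Q"
    proof (cases "P a0 a0 = 0")
      case True
      have row: "P a0 b = 0" for b using psd_zero_row[OF p True] .
      have col: "P b a0 = 0" for b using herm_cnj[OF hP, of b a0] row[of b] by simp
      have "\<forall>a b. a \<notin> K \<or> b \<notin> K \<longrightarrow> P a b = 0"
      proof (intro allI impI)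
        fix a b assume ab: "a \<notin> K \<or> b \<notin> K"
        show "P a b = 0"
        proof (cases "a = a0 \<or> b = a0")
          case True then show ?thesis using row col by blast
        next
          case False then show ?thesis using sup ab by blast
        qed
      qed
      then show ?thesis using insert.IH Kb' p by blast
    next
      case False
      define pr where "pr = Re (P a0 a0)"
      have Pd: "P a0 a0 = complex_of_real pr" using herm_diag_real[OF hP] pr_def by simp
      have "pr \<noteq> 0" using False Pd by auto
      then have pr0: "pr > 0" using psd_diag_nonneg[OF p, of a0] pr_def by linarith
      define R where "R = (\<lambda>a b. P a a0 * P a0 b)"
      define P' where "P' = osub P (osc (1 / pr) R)"
      have hR: "herm ds R"
      proof (rule hermI)
        show "is_op ds R" unfolding is_op_def R_def
          using is_op_out[OF herm_is_op[OF hP]] by auto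
        fix a b show "R a b = cnj (R b a)"
          unfolding R_def using herm_cnj[OF hP, of a a0] herm_cnj[OF hP, of a0 b] by (simp add: mult.commute)
      qed
      have hP': "herm ds P'" unfolding P'_def by (intro herm_osub hP herm_osc hR)
      have qP': "0 \<le> Re (quad ds P' v)" for v
      proof -
        define g where "g = (\<Sum>b\<in>basis ds. P a0 b * v b)"
        have g1: "cnj (v a) * P a a0 = cnj (P a0 a * v a)" for a
        proof -
          have "P a a0 = cnj (P a0 a)" by (rule herm_cnj[OF hP])
          then show ?thesis by (simp add: mult.commute)
        qed
        have g2: "(\<Sum>a\<in>basis ds. cnj (v a) * P a a0) = cnj g"
          unfolding g_def cnj_sum g1 by simp
        have "quad ds R v = (\<Sum>a\<in>basis ds. \<Sum>b\<in>basis ds. (cnj (v a) * P a a0) * (P a0 b * v b))"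
          unfolding quad_def R_def by (intro sum.cong) (auto simp: mult_ac)
        also have "\<dots> = cnj g * g" unfolding sum_product[symmetric] g2 g_def by simp
        finally have qR: "quad ds R v = cnj g * g" .
        have qP'1: "quad ds P' v = quad ds P v - cnj g * g / complex_of_real pr"
          unfolding P'_def quad_osub quad_osc qR by simp
        define c where "c = - g / complex_of_real pr"
        have "quad ds P (\<lambda>x. v x + (if x = a0 then c else 0))
           = quad ds P v + c * cnj g + cnj c * g + cnj c * P a0 a0 * c"
        proof -
          have b1: "bil ds P v (\<lambda>x. if x = a0 then c else 0) = c * cnj g"
            using bil_delta_right[OF a0b, of P v c] g2 by simp
          have b2: "bil ds P (\<lambda>x. if x = a0 then c else 0) v = cnj c * g"
            using bil_delta_left[OF a0b, of P c v] g_def by simp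
          have b3: "bil ds P (\<lambda>x. if x = a0 then c else 0) (\<lambda>x. if x = a0 then c else 0) = cnj c * P a0 a0 * c"
            by (rule bil_delta_delta[OF a0b a0b])
          show ?thesis unfolding quad_bil bil_add_left bil_add_right b1 b2 b3 by simp
        qed
        also have "\<dots> = quad ds P v - cnj g * g / complex_of_real pr"
          using pr0 by (simp add: c_def Pd field_simps)
        finally have "quad ds P' v = quad ds P (\<lambda>x. v x + (if x = a0 then c else 0))"
          using qP'1 by simp
        then show ?thesis using psd_quad[OF p] by simp
      qed
      have pP': "psd ds P'" using hP' qP' by (simp add: psd_iff_quad)
      have supP': "\<forall>a b. a \<notin> K \<or> b \<notin> K \<longrightarrow> P' a b = 0"
      proof (intro allI impI)
        fix a b assume ab: "a \<notin> K \<or> b \<notin> K"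
        show "P' a b = 0"
        proof (cases "a = a0")
          case True
          then show ?thesis using pr0 by (simp add: P'_def R_def Pd)
        next
          case na: False
          show ?thesis
          proof (cases "b = a0")
            case True
            then show ?thesis using pr0 by (simp add: P'_def R_def Pd)
          next
            case nb: False
            have "a \<notin> insert a0 K \<or> b \<notin> insert a0 K" using ab na nb by auto
            then have "P a b = 0" "P a a0 = 0 \<or> P a0 b = 0" using sup by auto
            then show ?thesis by (auto simp: P'_def R_def)
          qed
        qed
      qed
      have IH: "0 \<le> hs ds P' Q" using insert.IH Kb' pP' supP' by blast
      have hsR: "hs ds R Q = Re (quad ds Q (\<lambda>x. P x a0))"
      proof -
        have "(\<Sum>a\<in>basis ds. \<Sum>b\<in>basis ds. R a b * Q b a)
            = (\<Sum>b\<in>basis ds. \<Sum>a\<in>basis ds. cnj (P b a0) * Q b a * P a a0)"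
        proof -
          have t: "P a a0 * P a0 b * Q b a = cnj (P b a0) * Q b a * P a a0" for a b
          proof -
            have "P a0 b = cnj (P b a0)" by (rule herm_cnj[OF hP])
            then show ?thesis by (simp add: mult_ac)
          qed
          show ?thesis unfolding R_def t by (rule sum.swap)
        qed
        then show ?thesis by (simp add: hs_def quad_def)
      qed
      have "hs ds P Q = hs ds P' Q + (1 / pr) * hs ds R Q"
        unfolding P'_def hs_sub1 hs_sc1 by simp
      then show ?thesis using IH hsR psd_quad[OF Q] pr0 by simp
    qed
  qed
qed

lemma psd_pairing: "psd ds P \<Longrightarrow> psd ds Q \<Longrightarrow> 0 \<le> hs ds P Q"
proof -
  assume P: "psd ds P" and Q: "psd ds Q"
  have "\<forall>a b. a \<notin> basis ds \<or> b \<notin> basis ds \<longrightarrow> P a b = 0"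
    using is_op_out[OF herm_is_op[OF psd_herm[OF P]]] by blast
  then show ?thesis using pairing_aux[OF finite_basis Q] P by blast
qed


lemma hs_self: "herm ds X \<Longrightarrow> hs ds X X = (\<Sum>a\<in>basis ds. \<Sum>b\<in>basis ds. (cmod (X a b))\<^sup>2)"
proof -
  assume h: "herm ds X"
  have t: "X a b * X b a = complex_of_real ((cmod (X a b))\<^sup>2)" for a b
  proof -
    have e: "X b a = cnj (X a b)" by (rule herm_cnj[OF h])
    show ?thesis unfolding e complex_norm_square by (rule refl)
  qed
  show ?thesis unfolding hs_def t by (simp add: Re_sum)
qed

lemma hs_self_nonneg: "herm ds X \<Longrightarrow> 0 \<le> hs ds X X"
  by (simp add: hs_self sum_nonneg)

lemma hs_self_zero: "herm ds X \<Longrightarrow> hs ds X X = 0 \<Longrightarrow> X = zop"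
proof -
  assume h: "herm ds X" and z: "hs ds X X = 0"
  have "X a b = 0" for a b
  proof (cases "a \<in> basis ds \<and> b \<in> basis ds")
    case True
    have z2: "(\<Sum>a\<in>basis ds. \<Sum>b\<in>basis ds. (cmod (X a b))\<^sup>2) = 0" using z hs_self[OF h] by simp
    have "(\<Sum>b\<in>basis ds. (cmod (X a b))\<^sup>2) = 0"
      using z2 sum_nonneg_eq_0_iff[of "basis ds" "\<lambda>a. \<Sum>b\<in>basis ds. (cmod (X a b))\<^sup>2"] True
      by (simp add: sum_nonneg)
    then have "(cmod (X a b))\<^sup>2 = 0"
      using sum_nonneg_eq_0_iff[of "basis ds" "\<lambda>b. (cmod (X a b))\<^sup>2"] True by simp
    then show ?thesis by simp
  next
    case False then show ?thesis using is_op_out[OF herm_is_op[OF h]] by blast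
  qed
  then show ?thesis by (auto simp: zop_def)
qed

lemma hs_self_entry: "herm ds X \<Longrightarrow> a \<in> basis ds \<Longrightarrow> b \<in> basis ds \<Longrightarrow> (cmod (X a b))\<^sup>2 \<le> hs ds X X"
proof -
  assume h: "herm ds X" and a: "a \<in> basis ds" and b: "b \<in> basis ds"
  have "(cmod (X a b))\<^sup>2 \<le> (\<Sum>b\<in>basis ds. (cmod (X a b))\<^sup>2)"
    by (rule member_le_sum[OF b]) auto
  also have "\<dots> \<le> (\<Sum>a\<in>basis ds. \<Sum>b\<in>basis ds. (cmod (X a b))\<^sup>2)"
    by (rule member_le_sum[OF a, of "\<lambda>a. \<Sum>b\<in>basis ds. (cmod (X a b))\<^sup>2"]) (auto intro: sum_nonneg)
  finally show ?thesis using hs_self[OF h] by simp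
qed

definition idop :: "nat list \<Rightarrow> op" where
  "idop ds = (\<lambda>a b. if a = b \<and> a \<in> basis ds then 1 else 0)"

lemma herm_idop: "herm ds (idop ds)"
  by (rule hermI) (auto simp: idop_def is_op_def)

lemma quad_idop: "quad ds (idop ds) u = complex_of_real (\<Sum>a\<in>basis ds. (cmod (u a))\<^sup>2)"
proof -
  have "quad ds (idop ds) u = (\<Sum>a\<in>basis ds. cnj (u a) * u a)"
  proof -
    have "quad ds (idop ds) u = (\<Sum>a\<in>basis ds. \<Sum>b\<in>basis ds. if b = a then cnj (u a) * u a else 0)"
      unfolding quad_def idop_def by (intro sum.cong) auto
    then show ?thesis by (simp add: sum.delta)
  qed
  then show ?thesis by (simp add: cnj_mult_self)
qed

lemma psd_idop: "psd ds (idop ds)"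
  using herm_idop by (simp add: psd_iff_quad quad_idop sum_nonneg)

lemma idt_idop: "idt d (idop ds) = idop (d # ds)"
proof (intro ext)
  fix a b show "idt d (idop ds) a b = idop (d # ds) a b"
    unfolding idt_def idop_def by (cases a; cases b) auto
qed

lemma ptr_head_idop: "ptr_head d (idop (d # ds)) = osc (real d) (idop ds)"
  by (intro ext) (simp add: ptr_head_def idop_def)

lemma trace_idop: "trace ds (idop ds) = of_nat (card (basis ds))"
  by (simp add: trace_def idop_def)

lemma quad_bound:
  fixes u :: "nat list \<Rightarrow> complex"
  shows "cmod (quad ds X u) \<le> (\<Sum>a\<in>basis ds. \<Sum>b\<in>basis ds. cmod (X a b)) * (\<Sum>a\<in>basis ds. (cmod (u a))\<^sup>2)"
proof -
  define N where "N = (\<Sum>a\<in>basis ds. (cmod (u a))\<^sup>2)"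
  have uN: "(cmod (u a))\<^sup>2 \<le> N" if "a \<in> basis ds" for a
    unfolding N_def by (rule member_le_sum[OF that]) auto
  have pr: "cmod (u a) * cmod (u b) \<le> N" if "a \<in> basis ds" "b \<in> basis ds" for a b
  proof -
    have "cmod (u a) * cmod (u b) \<le> ((cmod (u a))\<^sup>2 + (cmod (u b))\<^sup>2) / 2"
      using sum_squares_bound[of "cmod (u a)" "cmod (u b)"] by (simp add: power2_eq_square)
    then show ?thesis using uN[OF that(1)] uN[OF that(2)] by simp
  qed
  have "cmod (quad ds X u) \<le> (\<Sum>a\<in>basis ds. \<Sum>b\<in>basis ds. cmod (cnj (u a) * X a b * u b))"
    unfolding quad_def by (rule order_trans[OF norm_sum sum_mono[OF norm_sum]])
  also have "\<dots> \<le> (\<Sum>a\<in>basis ds. \<Sum>b\<in>basis ds. cmod (X a b) * N)"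
  proof (intro sum_mono)
    fix a b assume a: "a \<in> basis ds" and b: "b \<in> basis ds"
    have "cmod (cnj (u a) * X a b * u b) = cmod (X a b) * (cmod (u a) * cmod (u b))"
      by (simp add: norm_mult)
    also have "\<dots> \<le> cmod (X a b) * N" using pr[OF a b] by (simp add: mult_left_mono)
    finally show "cmod (cnj (u a) * X a b * u b) \<le> cmod (X a b) * N" .
  qed
  also have "\<dots> = (\<Sum>a\<in>basis ds. \<Sum>b\<in>basis ds. cmod (X a b)) * N"
    by (simp add: sum_distrib_right)
  finally show ?thesis unfolding N_def .
qed

lemma herm_upper_bound: "herm ds X \<Longrightarrow> \<exists>k. psd ds (osub (osc k (idop ds)) X)"
proof -
  assume h: "herm ds X"
  define k where "k = (\<Sum>a\<in>basis ds. \<Sum>b\<in>basis ds. cmod (X a b))"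
  have "0 \<le> Re (quad ds (osub (osc k (idop ds)) X) u)" for u
  proof -
    define N where "N = (\<Sum>a\<in>basis ds. (cmod (u a))\<^sup>2)"
    have "Re (quad ds X u) \<le> cmod (quad ds X u)" by (rule complex_Re_le_cmod)
    also have "\<dots> \<le> k * N" unfolding k_def N_def by (rule quad_bound)
    finally have "Re (quad ds X u) \<le> k * N" .
    then show ?thesis by (simp add: quad_osub quad_osc quad_idop N_def)
  qed
  moreover have "herm ds (osub (osc k (idop ds)) X)" by (intro herm_osub herm_osc herm_idop h)
  ultimately show ?thesis by (auto simp: psd_iff_quad)
qed


lemma ptr_head_oadd: "ptr_head d (oadd X Y) = oadd (ptr_head d X) (ptr_head d Y)"
  by (intro ext) (simp add: ptr_head_def sum.distrib)
lemma ptr_head_osub: "ptr_head d (osub X Y) = osub (ptr_head d X) (ptr_head d Y)"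
  by (intro ext) (simp add: ptr_head_def sum_subtractf)
lemma ptr_head_osc: "ptr_head d (osc r X) = osc r (ptr_head d X)"
  by (intro ext) (simp add: ptr_head_def sum_distrib_left)
lemma ptr_head_zop[simp]: "ptr_head d zop = zop"
  by (intro ext) (simp add: ptr_head_def)
lemma idt_oadd: "idt d (oadd X Y) = oadd (idt d X) (idt d Y)"
proof (intro ext)
  fix a b show "idt d (oadd X Y) a b = oadd (idt d X) (idt d Y) a b"
    unfolding idt_def by (cases a; cases b) auto
qed
lemma idt_osub: "idt d (osub X Y) = osub (idt d X) (idt d Y)"
proof (intro ext)
  fix a b show "idt d (osub X Y) a b = osub (idt d X) (idt d Y) a b"
    unfolding idt_def by (cases a; cases b) auto
qed
lemma idt_osc: "idt d (osc r X) = osc r (idt d X)"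
  by (intro ext) (simp add: idt_def split: list.splits)
lemma idt_zop[simp]: "idt d zop = zop"
  by (intro ext) (simp add: idt_def split: list.splits)
lemma osc_osc: "osc r (osc s X) = osc (r * s) X"
  by (intro ext) simp
lemma osc_1[simp]: "osc 1 X = X"
  by (intro ext) simp
lemma osc_0[simp]: "osc 0 X = zop"
  by (intro ext) simp
lemma oadd_osc: "oadd (osc r X) (osc s X) = osc (r + s) X"
  by (intro ext) (simp add: distrib_right)
lemma oadd_zop[simp]: "oadd X zop = X" "oadd zop X = X"
  by (intro ext, simp)+
lemma osub_zop[simp]: "osub X zop = X"
  by (intro ext) simp
lemma osc_zop[simp]: "osc r zop = zop"
  by (intro ext) simp

lemma Ld_Suc: "Ld w v (Suc t) = w (Suc t) # Td w v (Suc t)"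
  by (simp add: Td_def)
lemma Td_Suc: "Td w v (Suc t) = v (Suc t) # Ld w v t"
  by (simp add: Td_def)
lemma Td_1: "Td w v 1 = [v 1]"
  by (simp add: Td_def)

definition chainE :: "(nat \<Rightarrow> nat) \<Rightarrow> (nat \<Rightarrow> nat) \<Rightarrow> nat \<Rightarrow> real \<Rightarrow> (nat \<Rightarrow> op) \<Rightarrow> bool" where
  "chainE w v T l Y \<longleftrightarrow> Y 0 = osc l scalar1 \<and>
     (\<forall>t\<in>{1..T}. ptr_head (w t) (Y t) = idt (v t) (Y (t - 1)))"

definition chainP :: "(nat \<Rightarrow> nat) \<Rightarrow> (nat \<Rightarrow> nat) \<Rightarrow> nat \<Rightarrow> real \<Rightarrow> (nat \<Rightarrow> op) \<Rightarrow> bool" where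
  "chainP w v T l Y \<longleftrightarrow> chainE w v T l Y \<and> (\<forall>t\<in>{1..T}. psd (Ld w v t) (Y t))"

definition testerP :: "(nat \<Rightarrow> nat) \<Rightarrow> (nat \<Rightarrow> nat) \<Rightarrow> nat \<Rightarrow> (nat \<Rightarrow> op) \<Rightarrow> bool" where
  "testerP w v T \<tau> \<longleftrightarrow> (\<forall>t\<in>{1..T}. psd (Td w v t) (\<tau> t)) \<and>
     trace (Td w v 1) (\<tau> 1) = 1 \<and>
     (\<forall>t\<in>{2..T}. ptr_head (v t) (\<tau> t) = idt (w (t - 1)) (\<tau> (t - 1)))"

lemma SG_eq: "SG w v T = {idt (w T) (\<tau> T) | \<tau>. testerP w v T \<tau>}"
  by (simp add: SG_def testerP_def)

lemma hs_scalar1: "hs [] (osc l scalar1) Y = l * Re (Y [] [])"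
  by (simp add: hs_def scalar1_def)

lemma chain_identity:
  assumes tp: "testerP w v T \<tau>" and ce: "chainE w v T l Y"
  shows "1 \<le> t \<Longrightarrow> t \<le> T \<Longrightarrow> hs (Ld w v t) (idt (w t) (\<tau> t)) (Y t) = l"
proof (induction t)
  case 0 then show ?case by simp
next
  case (Suc t)
  have eqY: "ptr_head (w (Suc t)) (Y (Suc t)) = idt (v (Suc t)) (Y t)"
    using ce Suc.prems by (auto simp: chainE_def)
  have "hs (Ld w v (Suc t)) (idt (w (Suc t)) (\<tau> (Suc t))) (Y (Suc t))
      = hs (Td w v (Suc t)) (\<tau> (Suc t)) (idt (v (Suc t)) (Y t))"
    unfolding Ld_Suc hs_idt eqY ..
  also have "\<dots> = hs (Ld w v t) (Y t) (ptr_head (v (Suc t)) (\<tau> (Suc t)))"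
    unfolding Td_Suc by (subst hs_sym) (rule hs_idt)
  finally have step: "hs (Ld w v (Suc t)) (idt (w (Suc t)) (\<tau> (Suc t))) (Y (Suc t))
      = hs (Ld w v t) (Y t) (ptr_head (v (Suc t)) (\<tau> (Suc t)))" .
  show ?case
  proof (cases "t = 0")
    case True
    have Y0: "Y 0 = osc l scalar1" using ce by (simp add: chainE_def)
    have tr: "trace [v 1] (\<tau> 1) = 1" using tp by (simp add: testerP_def Td_def)
    have "ptr_head (v 1) (\<tau> 1) [] [] = trace [v 1] (\<tau> 1)"
      by (simp add: ptr_head_def trace_def sum_basis_Cons)
    then show ?thesis using step True Y0 tr by (simp add: hs_scalar1)
  next
    case False
    have eqt: "ptr_head (v (Suc t)) (\<tau> (Suc t)) = idt (w t) (\<tau> t)"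
      using tp Suc.prems False by (auto simp: testerP_def)
    have "hs (Ld w v t) (Y t) (idt (w t) (\<tau> t)) = l"
      using Suc.IH Suc.prems False by (simp add: hs_sym)
    then show ?thesis using step eqt by simp
  qed
qed

lemma chainE_add: "chainE w v T l1 Y1 \<Longrightarrow> chainE w v T l2 Y2 \<Longrightarrow>
   chainE w v T (l1 + l2) (\<lambda>t. oadd (Y1 t) (Y2 t))"
  by (simp add: chainE_def ptr_head_oadd idt_oadd oadd_osc)

lemma chainE_sc: "chainE w v T l Y \<Longrightarrow> chainE w v T (r * l) (\<lambda>t. osc r (Y t))"
  by (simp add: chainE_def ptr_head_osc idt_osc osc_osc)

lemma chainP_add: "chainP w v T l1 Y1 \<Longrightarrow> chainP w v T l2 Y2 \<Longrightarrow>
   chainP w v T (l1 + l2) (\<lambda>t. oadd (Y1 t) (Y2 t))"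
  by (simp add: chainP_def chainE_add psd_oadd)

lemma chainP_sc: "chainP w v T l Y \<Longrightarrow> 0 \<le> r \<Longrightarrow> chainP w v T (r * l) (\<lambda>t. osc r (Y t))"
  by (simp add: chainP_def chainE_sc psd_osc)

lemma chainP_Chn:
  assumes cp: "chainP w v T 1 Y" and T: "1 \<le> T"
  shows "Y T \<in> Chn w v T"
proof -
  have ce: "chainE w v T 1 Y" and ps: "\<forall>t\<in>{1..T}. psd (Ld w v t) (Y t)" using cp by (auto simp: chainP_def)
  have Y0: "Y 0 = scalar1" using ce by (simp add: chainE_def)
  show ?thesis unfolding Chn_def
  proof (intro CollectI conjI exI[of _ Y])
    show "psd (Ld w v T) (Y T)" using ps T by auto
    show "Y T = Y T" ..
    show "\<forall>t\<in>{1..T}. psd (Ld w v t) (Y t)" by fact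
    show "\<forall>t\<in>{2..T}. ptr_head (w t) (Y t) = idt (v t) (Y (t - 1))" using ce by (auto simp: chainE_def)
    show "ptr_head (w 1) (Y 1) = idt (v 1) scalar1" using ce T Y0 by (auto simp: chainE_def)
  qed
qed

fun kap :: "(nat \<Rightarrow> nat) \<Rightarrow> nat \<Rightarrow> real" where
  "kap w 0 = 1"
| "kap w (Suc t) = kap w t / real (w (Suc t))"

definition c0 :: "(nat \<Rightarrow> nat) \<Rightarrow> (nat \<Rightarrow> nat) \<Rightarrow> nat \<Rightarrow> op" where
  "c0 w v t = osc (kap w t) (idop (Ld w v t))"

lemma kap_pos: "\<forall>s\<in>{1..t}. 1 \<le> w s \<Longrightarrow> kap w t > 0"
proof (induction t)
  case 0 then show ?case by simp
next
  case (Suc t)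
  have "kap w t > 0" using Suc by auto
  moreover have "1 \<le> w (Suc t)" using Suc.prems by auto
  ultimately show ?case by simp
qed

lemma idop_Nil: "idop [] = scalar1"
  by (intro ext) (auto simp: idop_def scalar1_def)

lemma c0_chainP:
  assumes "\<forall>s\<in>{1..T}. 1 \<le> w s"
  shows "chainP w v T 1 (c0 w v)"
proof -
  have "ptr_head (w t) (c0 w v t) = idt (v t) (c0 w v (t - 1))" if t: "t \<in> {1..T}" for t
  proof -
    obtain s where s: "t = Suc s" using t by (cases t) auto
    have "1 \<le> w t" using assms t by blast
    then have w1: "real (w t) \<noteq> 0" by simp
    have "ptr_head (w t) (c0 w v t) = osc (kap w t * real (w t)) (idop (v t # Ld w v s))"
      unfolding c0_def s by (simp add: ptr_head_osc ptr_head_idop osc_osc)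
    also have "\<dots> = osc (kap w s) (idop (v t # Ld w v s))" using w1 s by simp
    also have "\<dots> = idt (v t) (c0 w v (t - 1))" unfolding c0_def s by (simp add: idt_osc idt_idop)
    finally show ?thesis .
  qed
  moreover have "c0 w v 0 = osc 1 scalar1" by (simp add: c0_def idop_Nil)
  moreover have "psd (Ld w v t) (c0 w v t)" if "t \<in> {1..T}" for t
  proof -
    have "\<forall>s\<in>{1..t}. 1 \<le> w s" using assms that by auto
    then have "kap w t > 0" by (rule kap_pos)
    then show ?thesis unfolding c0_def by (intro psd_osc psd_idop) auto
  qed
  ultimately show ?thesis by (simp add: chainP_def chainE_def)
qed

lemma lin_span_mem: "x \<in> A \<Longrightarrow> x \<in> lin_span A"
  unfolding lin_span_def
  by (intro CollectI exI[of _ "{x}"] exI[of _ "\<lambda>_. 1"]) auto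

lemma lin_span_add: "x \<in> lin_span A \<Longrightarrow> y \<in> lin_span A \<Longrightarrow> oadd x y \<in> lin_span A"
proof -
  assume "x \<in> lin_span A" "y \<in> lin_span A"
  then obtain F1 r1 F2 r2 where F: "finite F1" "F1 \<subseteq> A" "finite F2" "F2 \<subseteq> A"
    and x: "x = (\<lambda>a b. \<Sum>c\<in>F1. complex_of_real (r1 c) * c a b)"
    and y: "y = (\<lambda>a b. \<Sum>c\<in>F2. complex_of_real (r2 c) * c a b)"
    unfolding lin_span_def by blast
  define r where "r = (\<lambda>c. (if c \<in> F1 then r1 c else 0) + (if c \<in> F2 then r2 c else 0))"
  have "oadd x y = (\<lambda>a b. \<Sum>c\<in>F1 \<union> F2. complex_of_real (r c) * c a b)"
  proof (intro ext)
    fix a b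
    have "(\<Sum>c\<in>F1 \<union> F2. complex_of_real (r c) * c a b)
       = (\<Sum>c\<in>F1 \<union> F2. (if c \<in> F1 then complex_of_real (r1 c) * c a b else 0))
         + (\<Sum>c\<in>F1 \<union> F2. (if c \<in> F2 then complex_of_real (r2 c) * c a b else 0))"
      unfolding r_def sum.distrib[symmetric] by (intro sum.cong) (auto simp: distrib_right)
    also have "\<dots> = (\<Sum>c\<in>F1. complex_of_real (r1 c) * c a b) + (\<Sum>c\<in>F2. complex_of_real (r2 c) * c a b)"
      using F by (simp add: sum.If_cases Int_absorb1 Int_absorb2)
    finally show "oadd x y a b = (\<Sum>c\<in>F1 \<union> F2. complex_of_real (r c) * c a b)"
      by (simp add: x y)
  qed
  then have "\<exists>F' r'. oadd x y = (\<lambda>a b. \<Sum>c\<in>F'. complex_of_real (r' c) * c a b) \<and> finite F' \<and> F' \<subseteq> A"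
    using F by (intro exI[of _ "F1 \<union> F2"] exI[of _ r]) auto
  then show ?thesis unfolding lin_span_def by simp
qed

lemma lin_span_sc: "x \<in> lin_span A \<Longrightarrow> osc s x \<in> lin_span A"
proof -
  assume "x \<in> lin_span A"
  then obtain F r where F: "finite F" "F \<subseteq> A"
    and x: "x = (\<lambda>a b. \<Sum>c\<in>F. complex_of_real (r c) * c a b)"
    unfolding lin_span_def by blast
  have "osc s x = (\<lambda>a b. \<Sum>c\<in>F. complex_of_real (s * r c) * c a b)"
    by (intro ext) (simp add: x sum_distrib_left mult_ac)
  then have "\<exists>F' r'. osc s x = (\<lambda>a b. \<Sum>c\<in>F'. complex_of_real (r' c) * c a b) \<and> finite F' \<and> F' \<subseteq> A"
    using F by (intro exI[of _ F] exI[of _ "\<lambda>c. s * r c"]) auto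
  then show ?thesis unfolding lin_span_def by simp
qed


lemma BW_finite:
  fixes s :: "nat \<Rightarrow> 'k \<Rightarrow> complex"
  assumes "finite K" "\<forall>k\<in>K. \<exists>B. \<forall>n. cmod (s n k) \<le> B"
  shows "\<exists>r L. strict_mono r \<and> (\<forall>k\<in>K. (\<lambda>n. s (r n) k) \<longlonglongrightarrow> L k)"
  using assms
proof (induction K arbitrary: s)
  case empty
  show ?case by (intro exI[of _ id]) (auto simp: strict_mono_def)
next
  case (insert k0 K)
  obtain r1 L where r1: "strict_mono r1" and L: "\<forall>k\<in>K. (\<lambda>n. s (r1 n) k) \<longlonglongrightarrow> L k"
    using insert.IH[of s] insert.prems by auto
  obtain B where B: "\<forall>n. cmod (s n k0) \<le> B" using insert.prems by auto
  have "bounded (range (\<lambda>n. s (r1 n) k0))"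
    unfolding bounded_iff using B by auto
  then obtain l r2 where r2: "strict_mono r2" and l: "((\<lambda>n. s (r1 n) k0) \<circ> r2) \<longlonglongrightarrow> l"
    using bounded_imp_convergent_subsequence by blast
  define L' where "L' = L(k0 := l)"
  have "\<forall>k\<in>insert k0 K. (\<lambda>n. s ((r1 \<circ> r2) n) k) \<longlonglongrightarrow> L' k"
  proof
    fix k assume k: "k \<in> insert k0 K"
    show "(\<lambda>n. s ((r1 \<circ> r2) n) k) \<longlonglongrightarrow> L' k"
    proof (cases "k = k0")
      case True then show ?thesis using l by (simp add: L'_def comp_def)
    next
      case False
      then have "k \<in> K" using k by auto
      then have "((\<lambda>n. s (r1 n) k) \<circ> r2) \<longlonglongrightarrow> L k" using L r2 LIMSEQ_subseq_LIMSEQ by blast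
      then show ?thesis using False by (simp add: L'_def comp_def)
    qed
  qed
  then show ?case using strict_mono_o[OF r1 r2] by blast
qed

definition TL :: "(nat \<Rightarrow> op) \<Rightarrow> op \<Rightarrow> bool" where
  "TL Ys Yl \<longleftrightarrow> (\<forall>a b. (\<lambda>n. Ys n a b) \<longlonglongrightarrow> Yl a b)"

lemma TL_osub: "TL Xs Xl \<Longrightarrow> TL Ys Yl \<Longrightarrow> TL (\<lambda>n. osub (Xs n) (Ys n)) (osub Xl Yl)"
  by (auto simp: TL_def intro: tendsto_diff)
lemma TL_oadd: "TL Xs Xl \<Longrightarrow> TL Ys Yl \<Longrightarrow> TL (\<lambda>n. oadd (Xs n) (Ys n)) (oadd Xl Yl)"
  by (auto simp: TL_def intro: tendsto_add)
lemma TL_const: "TL (\<lambda>n. X) X"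
  by (auto simp: TL_def)
lemma TL_ptr_head: "TL Xs Xl \<Longrightarrow> TL (\<lambda>n. ptr_head d (Xs n)) (ptr_head d Xl)"
  unfolding TL_def ptr_head_def by (auto intro!: tendsto_sum)
lemma tendsto_if_const: "(P \<Longrightarrow> f \<longlonglongrightarrow> a) \<Longrightarrow> (\<lambda>n. if P then f n else 0) \<longlonglongrightarrow> (if P then a else 0)"
  by (cases P) auto

lemma TL_idt: "TL Xs Xl \<Longrightarrow> TL (\<lambda>n. idt d (Xs n)) (idt d Xl)"
  unfolding TL_def
proof (intro allI)
  fix a b assume h: "\<forall>a b. (\<lambda>n. Xs n a b) \<longlonglongrightarrow> Xl a b"
  show "(\<lambda>n. idt d (Xs n) a b) \<longlonglongrightarrow> idt d Xl a b"
  proof (cases a)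
    case Nil then show ?thesis by (simp add: idt_def)
  next
    case (Cons i a')
    show ?thesis
    proof (cases b)
      case Nil then show ?thesis using Cons by (simp add: idt_def)
    next
      case (Cons j b')
      have e1: "(\<lambda>n. idt d (Xs n) a b) = (\<lambda>n. if i = j \<and> i < d then Xs n a' b' else 0)"
        using \<open>a = i # a'\<close> Cons by (simp add: idt_def)
      have e2: "idt d Xl a b = (if i = j \<and> i < d then Xl a' b' else 0)"
        using \<open>a = i # a'\<close> Cons by (simp add: idt_def)
      show ?thesis unfolding e1 e2 by (rule tendsto_if_const) (use h in blast)
    qed
  qed
qed

lemma TL_hs: "TL Xs Xl \<Longrightarrow> TL Ys Yl \<Longrightarrow> (\<lambda>n. hs ds (Xs n) (Ys n)) \<longlonglongrightarrow> hs ds Xl Yl"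
  unfolding TL_def hs_def
  by (rule tendsto_Re, rule tendsto_sum, rule tendsto_sum, rule tendsto_mult) auto

lemma TL_quad: "TL Xs Xl \<Longrightarrow> (\<lambda>n. quad ds (Xs n) u) \<longlonglongrightarrow> quad ds Xl u"
  unfolding TL_def quad_def by (auto intro!: tendsto_sum tendsto_mult)

lemma TL_psd:
  assumes p: "\<And>n. psd ds (Xs n)" and t: "TL Xs Xl"
  shows "psd ds Xl"
proof -
  have iso: "is_op ds Xl"
    unfolding is_op_def
  proof (intro allI impI)
    fix a b assume ab: "a \<notin> basis ds \<or> b \<notin> basis ds"
    have "\<And>n. Xs n a b = 0" using is_op_out[OF herm_is_op[OF psd_herm[OF p]] ab] .
    then have "(\<lambda>n. Xs n a b) \<longlonglongrightarrow> 0" by simp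
    moreover have "(\<lambda>n. Xs n a b) \<longlonglongrightarrow> Xl a b" using t by (simp add: TL_def)
    ultimately show "Xl a b = 0" using LIMSEQ_unique by blast
  qed
  have hc: "Xl a b = cnj (Xl b a)" for a b
  proof -
    have "(\<lambda>n. Xs n a b) \<longlonglongrightarrow> Xl a b" using t by (simp add: TL_def)
    moreover have "(\<lambda>n. cnj (Xs n b a)) \<longlonglongrightarrow> cnj (Xl b a)"
      using t by (auto simp: TL_def intro: tendsto_cnj)
    moreover have "(\<lambda>n. Xs n a b) = (\<lambda>n. cnj (Xs n b a))"
    proof
      fix n show "Xs n a b = cnj (Xs n b a)" by (rule herm_cnj[OF psd_herm[OF p]])
    qed
    ultimately show ?thesis using LIMSEQ_unique by simp
  qed
  have q: "0 \<le> Re (quad ds Xl u)" for u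
  proof -
    have "(\<lambda>n. Re (quad ds (Xs n) u)) \<longlonglongrightarrow> Re (quad ds Xl u)"
      by (intro tendsto_Re TL_quad[OF t])
    moreover have "\<exists>N. \<forall>n\<ge>N. 0 \<le> Re (quad ds (Xs n) u)" using psd_quad[OF p] by blast
    ultimately show ?thesis by (rule LIMSEQ_le_const)
  qed
  have "herm ds Xl" using iso hc by (rule hermI)
  then show ?thesis using q by (simp add: psd_iff_quad)
qed


lemma Ld_eq: "1 \<le> t \<Longrightarrow> Ld w v t = w t # Td w v t"
  by (cases t) (auto simp: Td_def)
lemma Td_eq: "1 \<le> t \<Longrightarrow> Td w v t = v t # Ld w v (t - 1)"
  by (simp add: Td_def)

lemma trace_osub: "trace ds (osub X Y) = trace ds X - trace ds Y"
  by (simp add: trace_def sum_subtractf)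
lemma trace_scalar: "trace [] (osc l scalar1) = complex_of_real l"
  by (simp add: trace_def scalar1_def)
lemma herm_scalar: "herm [] (osc l scalar1)"
  by (rule hermI) (auto simp: is_op_def scalar1_def)

lemma hs_comb: "hs ds (oadd (osc a A) (osc b B)) (oadd (osc a A) (osc b B))
   = a * a * hs ds A A + 2 * a * b * hs ds A B + b * b * hs ds B B"
  unfolding hs_add1 hs_add2 hs_sc1 hs_sc2 using hs_sym[of ds B A] by (simp add: algebra_simps)

lemma entry_le_hs: "herm ds Y \<Longrightarrow> a \<in> basis ds \<Longrightarrow> b \<in> basis ds \<Longrightarrow> cmod (Y a b) \<le> 1 + hs ds Y Y"
proof -
  assume h: "herm ds Y" and a: "a \<in> basis ds" and b: "b \<in> basis ds"
  have "(cmod (Y a b))\<^sup>2 \<le> hs ds Y Y" by (rule hs_self_entry[OF h a b])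
  moreover have "cmod (Y a b) \<le> 1 + (cmod (Y a b))\<^sup>2"
  proof (cases "cmod (Y a b) \<le> 1")
    case True then show ?thesis by (simp add: add_increasing2)
  next
    case False
    then have "cmod (Y a b) \<le> cmod (Y a b) * cmod (Y a b)" by (simp add: mult_le_cancel_left1)
    then show ?thesis by (simp add: power2_eq_square)
  qed
  ultimately show ?thesis by linarith
qed

lemma trace_le_hs: "herm ds Y \<Longrightarrow> cmod (trace ds Y) \<le> real (card (basis ds)) * (1 + hs ds Y Y)"
proof -
  assume h: "herm ds Y"
  have "cmod (trace ds Y) \<le> (\<Sum>a\<in>basis ds. cmod (Y a a))" unfolding trace_def by (rule norm_sum)
  also have "\<dots> \<le> (\<Sum>a\<in>basis ds. 1 + hs ds Y Y)" by (intro sum_mono entry_le_hs[OF h]) auto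
  finally show ?thesis by simp
qed

lemma cond_real_ineq:
  fixes m p fB :: real
  assumes "\<And>u. 0 \<le> u \<Longrightarrow> u \<le> 1 \<Longrightarrow> m \<le> (1 - u) * (1 - u) * m + 2 * (1 - u) * u * p + u * u * fB"
  shows "m \<le> p"
proof (rule ccontr)
  assume "\<not> m \<le> p"
  then have mp: "p < m" by simp
  define C where "C = m - 2 * p + fB"
  have key: "(1 - u) * (1 - u) * m + 2 * (1 - u) * u * p + u * u * fB - m = u * (2 * (p - m) + u * C)" for u
    by (simp add: C_def algebra_simps)
  show False
  proof (cases "C \<le> 0")
    case True
    have "m \<le> (1 - 1) * (1 - 1) * m + 2 * (1 - 1) * 1 * p + 1 * 1 * fB" using assms[of 1] by simp
    then have "0 \<le> 1 * (2 * (p - m) + 1 * C)" using key[of 1] by linarith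
    then show False using True mp by simp
  next
    case False
    define u where "u = min 1 ((m - p) / C)"
    have u0: "0 < u" using False mp by (simp add: u_def)
    have u1: "u \<le> 1" by (simp add: u_def)
    have uC: "u * C \<le> m - p" using False by (simp add: u_def min_def field_simps split: if_splits)
    have "m \<le> (1 - u) * (1 - u) * m + 2 * (1 - u) * u * p + u * u * fB" using assms u0 u1 by simp
    then have "0 \<le> u * (2 * (p - m) + u * C)" using key[of u] by linarith
    moreover have "2 * (p - m) + u * C < 0" using uC mp by (smt (verit))
    ultimately show False using u0 by (simp add: mult_less_0_iff zero_le_mult_iff)
  qed
qed

locale sep =
  fixes w v :: "nat \<Rightarrow> nat" and T :: nat and X :: op and mu :: real
  assumes T1: "1 \<le> T" and dims: "\<forall>t\<in>{1..T}. 1 \<le> v t \<and> 1 \<le> w t" and hX: "herm (Ld w v T) X"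
begin

definition ee :: "nat \<Rightarrow> nat list" where "ee t = (if t \<le> T then Td w v t else Ld w v T)"
definition dd :: "nat \<Rightarrow> nat list" where "dd t = (if t = 0 then [] else if t \<le> T then Ld w v t else Ld w v T)"
definition Zset :: "tup set" where
  "Zset = {Z. (\<exists>l. l \<le> mu \<and> Z 0 = osc l scalar1) \<and> (\<forall>t\<in>{1..T}. psd (Ld w v t) (Z t)) \<and>
      psd (Ld w v T) (Z (Suc T)) \<and> (\<forall>t>Suc T. Z t = zop)}"
definition Rl :: "tup \<Rightarrow> tup" where
  "Rl Z t = (if 1 \<le> t \<and> t \<le> T then osub (ptr_head (w t) (Z t)) (idt (v t) (Z (t - 1)))
     else if t = Suc T then osub (Z T) (Z (Suc T)) else zop)"
definition Rr :: "tup \<Rightarrow> tup" where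
  "Rr Z t = (if t = Suc T then osub (Rl Z t) X else Rl Z t)"
definition ip :: "tup \<Rightarrow> tup \<Rightarrow> real" where
  "ip W V = (\<Sum>t\<in>{1..Suc T}. hs (ee t) (W t) (V t))"

lemma ee_le: "t \<le> T \<Longrightarrow> ee t = Td w v t" by (simp add: ee_def)
lemma ee_Suc: "ee (Suc T) = Ld w v T" by (simp add: ee_def)

lemma Zset_herm_prev: "Z \<in> Zset \<Longrightarrow> 1 \<le> t \<Longrightarrow> t \<le> T \<Longrightarrow> herm (Ld w v (t - 1)) (Z (t - 1))"
proof -
  assume Z: "Z \<in> Zset" and t: "1 \<le> t" "t \<le> T"
  show ?thesis
  proof (cases "t = 1")
    case True
    obtain l where "Z 0 = osc l scalar1" using Z by (auto simp: Zset_def)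
    then show ?thesis using True herm_scalar by simp
  next
    case False
    then have "t - 1 \<in> {1..T}" using t by auto
    then show ?thesis using Z psd_herm by (auto simp: Zset_def)
  qed
qed

lemma herm_Rr: "Z \<in> Zset \<Longrightarrow> t \<in> {1..Suc T} \<Longrightarrow> herm (ee t) (Rr Z t)"
proof -
  assume Z: "Z \<in> Zset" and t: "t \<in> {1..Suc T}"
  show ?thesis
  proof (cases "t \<le> T")
    case True
    have t1: "1 \<le> t" using t by auto
    have p: "psd (Ld w v t) (Z t)" using Z True t1 by (auto simp: Zset_def)
    have h1: "herm (Td w v t) (ptr_head (w t) (Z t))"
      using herm_ptr_head[OF psd_herm[OF p[unfolded Ld_eq[OF t1]]]] .
    have h2: "herm (Td w v t) (idt (v t) (Z (t - 1)))"
      unfolding Td_eq[OF t1] by (rule herm_idt[OF Zset_herm_prev[OF Z t1 True]])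
    show ?thesis using True t1 h1 h2 herm_osub by (simp add: Rr_def Rl_def ee_def)
  next
    case False
    then have tT: "t = Suc T" using t by auto
    have "herm (Ld w v T) (Z T)" "herm (Ld w v T) (Z (Suc T))"
      using Z T1 psd_herm by (auto simp: Zset_def)
    then show ?thesis using tT hX by (simp add: Rr_def Rl_def ee_def herm_osub)
  qed
qed

definition Zc :: "real \<Rightarrow> tup \<Rightarrow> tup \<Rightarrow> tup" where
  "Zc u Z1 Z2 = (\<lambda>t. oadd (osc (1 - u) (Z1 t)) (osc u (Z2 t)))"

lemma Zc_Zset: "Z1 \<in> Zset \<Longrightarrow> Z2 \<in> Zset \<Longrightarrow> 0 \<le> u \<Longrightarrow> u \<le> 1 \<Longrightarrow> Zc u Z1 Z2 \<in> Zset"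
proof -
  assume Z1: "Z1 \<in> Zset" and Z2: "Z2 \<in> Zset" and u: "0 \<le> u" "u \<le> 1"
  obtain l1 l2 where l1: "l1 \<le> mu" "Z1 0 = osc l1 scalar1" and l2: "l2 \<le> mu" "Z2 0 = osc l2 scalar1"
    using Z1 Z2 by (auto simp: Zset_def)
  have "Zc u Z1 Z2 0 = osc ((1 - u) * l1 + u * l2) scalar1"
    by (simp add: Zc_def l1 l2 osc_osc oadd_osc)
  moreover have "(1 - u) * l1 + u * l2 \<le> mu"
  proof -
    have "(1 - u) * l1 \<le> (1 - u) * mu" using l1 u by (simp add: mult_left_mono)
    moreover have "u * l2 \<le> u * mu" using l2 u by (simp add: mult_left_mono)
    ultimately show ?thesis by (simp add: algebra_simps)
  qed
  moreover have "\<forall>t\<in>{1..T}. psd (Ld w v t) (Zc u Z1 Z2 t)"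
    using Z1 Z2 u by (auto simp: Zset_def Zc_def intro!: psd_oadd psd_osc)
  moreover have "psd (Ld w v T) (Zc u Z1 Z2 (Suc T))"
    using Z1 Z2 u by (auto simp: Zset_def Zc_def intro!: psd_oadd psd_osc)
  moreover have "\<forall>t>Suc T. Zc u Z1 Z2 t = zop"
    using Z1 Z2 by (auto simp: Zset_def Zc_def)
  ultimately show ?thesis unfolding Zset_def by blast
qed

lemma Rl_Zc: "Rl (Zc u Z1 Z2) t = oadd (osc (1 - u) (Rl Z1 t)) (osc u (Rl Z2 t))"
  by (intro ext) (simp add: Rl_def Zc_def ptr_head_oadd ptr_head_osc idt_oadd idt_osc algebra_simps)

lemma Rr_Zc: "Rr (Zc u Z1 Z2) t = oadd (osc (1 - u) (Rr Z1 t)) (osc u (Rr Z2 t))"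
proof (cases "t = Suc T")
  case True
  show ?thesis unfolding Rr_def Rl_Zc using True by (intro ext) (simp add: algebra_simps)
next
  case False then show ?thesis unfolding Rr_def Rl_Zc by simp
qed

lemma ip_comb: "ip (\<lambda>t. oadd (osc a (A t)) (osc b (B t))) (\<lambda>t. oadd (osc a (A t)) (osc b (B t)))
   = a * a * ip A A + 2 * a * b * ip A B + b * b * ip B B"
  unfolding ip_def hs_comb by (simp only: sum.distrib sum_distrib_left)

lemma ip_self_nonneg: "(\<forall>t\<in>{1..Suc T}. herm (ee t) (A t)) \<Longrightarrow> 0 \<le> ip A A"
  unfolding ip_def by (intro sum_nonneg) (simp add: hs_self_nonneg)

lemma ip_self_slot: "(\<forall>t\<in>{1..Suc T}. herm (ee t) (A t)) \<Longrightarrow> t \<in> {1..Suc T} \<Longrightarrow> hs (ee t) (A t) (A t) \<le> ip A A"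
  unfolding ip_def by (rule member_le_sum) (auto simp: hs_self_nonneg)

end


context sep begin

definition Kset :: "(nat \<times> nat list \<times> nat list) set" where
  "Kset = {(t, a, b). t \<le> Suc T \<and> a \<in> basis (dd t) \<and> b \<in> basis (dd t)}"

lemma finite_Kset: "finite Kset"
proof -
  have "Kset \<subseteq> {..Suc T} \<times> (\<Union>t\<in>{..Suc T}. basis (dd t)) \<times> (\<Union>t\<in>{..Suc T}. basis (dd t))"
    by (auto simp: Kset_def)
  moreover have "finite ({..Suc T} \<times> (\<Union>t\<in>{..Suc T}. basis (dd t)) \<times> (\<Union>t\<in>{..Suc T}. basis (dd t)))"
    by auto
  ultimately show ?thesis by (rule finite_subset)
qed

lemma Zset_out: "Z \<in> Zset \<Longrightarrow> (t, a, b) \<notin> Kset \<Longrightarrow> Z t a b = 0"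
proof -
  assume Z: "Z \<in> Zset" and k: "(t, a, b) \<notin> Kset"
  show ?thesis
  proof (cases "t = 0")
    case True
    obtain l where "Z 0 = osc l scalar1" using Z by (auto simp: Zset_def)
    moreover have "a \<noteq> [] \<or> b \<noteq> []" using k True by (auto simp: Kset_def dd_def)
    ultimately show ?thesis using True by (auto simp: scalar1_def)
  next
    case t0: False
    show ?thesis
    proof (cases "t \<le> Suc T")
      case True
      have ab: "a \<notin> basis (dd t) \<or> b \<notin> basis (dd t)" using k True by (auto simp: Kset_def)
      have "psd (dd t) (Z t)"
      proof (cases "t \<le> T")
        case True then show ?thesis using Z t0 by (auto simp: Zset_def dd_def)
      next
        case False then have "t = Suc T" using \<open>t \<le> Suc T\<close> by simp
        then show ?thesis using Z by (auto simp: Zset_def dd_def)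
      qed
      then show ?thesis using is_op_out[OF herm_is_op[OF psd_herm], OF _ ab] by blast
    next
      case False then show ?thesis using Z by (auto simp: Zset_def)
    qed
  qed
qed

lemma Zset_psd: "Z \<in> Zset \<Longrightarrow> 1 \<le> t \<Longrightarrow> t \<le> T \<Longrightarrow> psd (Ld w v t) (Z t)"
  unfolding Zset_def by auto
lemma Zset_psdS: "Z \<in> Zset \<Longrightarrow> psd (Ld w v T) (Z (Suc T))"
  unfolding Zset_def by auto

definition fn :: "tup \<Rightarrow> real" where "fn Z = ip (Rr Z) (Rr Z)"

definition Zb :: tup where "Zb = (\<lambda>t. if t = 0 then osc mu scalar1 else zop)"

lemma Zb_Zset: "Zb \<in> Zset"
  unfolding Zset_def Zb_def using T1 by (auto simp: psd_zop)

lemma fn_nonneg: "Z \<in> Zset \<Longrightarrow> 0 \<le> fn Z"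
  unfolding fn_def by (intro ip_self_nonneg) (auto intro: herm_Rr)

lemma trace_rel:
  assumes Z: "Z \<in> Zset" and t: "1 \<le> t" "t \<le> T"
  shows "Re (trace (Ld w v t) (Z t)) = Re (trace (ee t) (Rr Z t)) + real (v t) * Re (trace (Ld w v (t - 1)) (Z (t - 1)))"
proof -
  have R: "Rr Z t = osub (ptr_head (w t) (Z t)) (idt (v t) (Z (t - 1)))"
    using t by (simp add: Rr_def Rl_def)
  have e: "ee t = Td w v t" using t by (simp add: ee_def)
  have a1: "trace (Td w v t) (ptr_head (w t) (Z t)) = trace (Ld w v t) (Z t)"
    using trace_ptr_head[of "Td w v t" "w t" "Z t"] Ld_eq[OF t(1)] by simp
  have a2: "trace (Td w v t) (idt (v t) (Z (t - 1))) = of_nat (v t) * trace (Ld w v (t - 1)) (Z (t - 1))"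
    unfolding Td_eq[OF t(1)] by (rule trace_idt)
  have "trace (ee t) (Rr Z t) = trace (Ld w v t) (Z t) - of_nat (v t) * trace (Ld w v (t - 1)) (Z (t - 1))"
    unfolding R e trace_osub a1 a2 ..
  then show ?thesis by simp
qed

theorem sep_main:
  "(\<exists>Z\<in>Zset. \<forall>t. Rr Z t = zop) \<or>
   (\<exists>W \<delta>. 0 < \<delta> \<and> (\<forall>t\<in>{1..Suc T}. herm (ee t) (W t)) \<and> (\<forall>Z\<in>Zset. \<delta> \<le> ip W (Rr Z)))"
proof -
  define m where "m = Inf (fn ` Zset)"
  have ne: "fn ` Zset \<noteq> {}" using Zb_Zset by auto
  have bdd: "bdd_below (fn ` Zset)" using fn_nonneg by (intro bdd_belowI[where m=0]) auto
  have m_le: "m \<le> fn Z" if "Z \<in> Zset" for Z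
    unfolding m_def using bdd that by (auto intro: cInf_lower)
  have "\<forall>n. \<exists>Z\<in>Zset. fn Z < m + inverse (real (Suc n))"
  proof
    fix n
    have "Inf (fn ` Zset) < m + inverse (real (Suc n))" unfolding m_def by simp
    then show "\<exists>Z\<in>Zset. fn Z < m + inverse (real (Suc n))"
      using cInf_less_iff[OF ne bdd] by auto
  qed
  then obtain Zs where Zs: "\<And>n. Zs n \<in> Zset" and Zsf: "\<And>n. fn (Zs n) < m + inverse (real (Suc n))"
    by metis
  define V where "V n = Rr (Zs n)" for n
  have hV: "herm (ee t) (V n t)" if "t \<in> {1..Suc T}" for n t
    unfolding V_def by (rule herm_Rr[OF Zs that])
  have fnb: "fn (Zs n) \<le> m + 1" for n
  proof -
    have "inverse (real (Suc n)) \<le> 1" by (simp add: inverse_le_1_iff)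
    then show ?thesis using Zsf[of n] by linarith
  qed
  have hsb: "hs (ee t) (V n t) (V n t) \<le> m + 1" if "t \<in> {1..Suc T}" for n t
    using ip_self_slot[of "V n" t] hV that fnb[of n] by (simp add: fn_def V_def)
  have entb: "cmod (V n t a b) \<le> m + 2" if "t \<in> {1..Suc T}" "a \<in> basis (ee t)" "b \<in> basis (ee t)" for n t a b
    using entry_le_hs[OF hV[of t n, OF that(1)] that(2,3)] hsb[of t n, OF that(1)] by simp
  define Bt where "Bt t = real (card (basis (ee t))) * (m + 2)" for t
  have trb: "\<bar>Re (trace (ee t) (V n t))\<bar> \<le> Bt t" if "t \<in> {1..Suc T}" for n t
  proof -
    have "\<bar>Re (trace (ee t) (V n t))\<bar> \<le> cmod (trace (ee t) (V n t))" by (rule abs_Re_le_cmod)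
    also have "\<dots> \<le> real (card (basis (ee t))) * (1 + hs (ee t) (V n t) (V n t))"
      by (rule trace_le_hs[OF hV[of t n, OF that]])
    also have "\<dots> \<le> Bt t" unfolding Bt_def using hsb[of t n, OF that] by (intro mult_left_mono) auto
    finally show ?thesis .
  qed
  have Bt0: "0 \<le> Bt t" if "t \<in> {1..Suc T}" for t
    using trb[OF that, of 0] by linarith
  define l where "l n = Re (Zs n 0 [] [])" for n
  have Zs0: "Zs n 0 = osc (l n) scalar1" "l n \<le> mu" for n
  proof -
    obtain l' where "l' \<le> mu" "Zs n 0 = osc l' scalar1" using Zs[of n] by (auto simp: Zset_def)
    moreover then have "l n = l'" by (simp add: l_def scalar1_def)
    ultimately show "Zs n 0 = osc (l n) scalar1" "l n \<le> mu" by auto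
  qed
  have tr0: "Re (trace (Ld w v 0) (Zs n 0)) = l n" for n
    by (simp add: Zs0 trace_scalar)
  have lb: "\<bar>l n\<bar> \<le> \<bar>mu\<bar> + Bt 1" for n
  proof -
    have "1 \<in> {1..T}" using T1 by simp
    then have p1: "psd (Ld w v 1) (Zs n 1)" using Zs[of n] unfolding Zset_def by blast
    have "0 \<le> Re (trace (Ld w v 1) (Zs n 1))" by (rule psd_trace_nonneg[OF p1])
    also have "\<dots> = Re (trace (ee 1) (V n 1)) + real (v 1) * l n"
      using trace_rel[OF Zs order_refl T1, of n] tr0[of n] by (simp add: V_def)
    finally have "- Bt 1 \<le> real (v 1) * l n" using trb[of 1 n] T1 by auto
    moreover have "1 \<le> v 1" using dims T1 by auto
    ultimately have "- Bt 1 \<le> l n"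
    proof (cases "0 \<le> l n")
      case True then show ?thesis using Bt0[of 1] T1 by auto
    next
      case False
      have "real (v 1) * l n \<le> 1 * l n"
        using False \<open>1 \<le> v 1\<close> by (intro mult_right_mono_neg) auto
      then show ?thesis using \<open>- Bt 1 \<le> real (v 1) * l n\<close> by simp
    qed
    then show ?thesis using Zs0(2)[of n] Bt0[of 1] T1 by auto
  qed
  have trbound: "\<forall>t. t \<le> T \<longrightarrow> (\<exists>C. \<forall>n. \<bar>Re (trace (Ld w v t) (Zs n t))\<bar> \<le> C)"
  proof (intro allI)
    fix t show "t \<le> T \<longrightarrow> (\<exists>C. \<forall>n. \<bar>Re (trace (Ld w v t) (Zs n t))\<bar> \<le> C)"
    proof (induction t)
      case 0 then show ?case using lb tr0 by auto
    next
      case (Suc t)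
      show ?case
      proof
        assume tT: "Suc t \<le> T"
        obtain C where C: "\<forall>n. \<bar>Re (trace (Ld w v t) (Zs n t))\<bar> \<le> C" using Suc tT by auto
        have "\<bar>Re (trace (Ld w v (Suc t)) (Zs n (Suc t)))\<bar> \<le> Bt (Suc t) + real (v (Suc t)) * C" for n
        proof -
          have p: "psd (Ld w v (Suc t)) (Zs n (Suc t))" using Zset_psd[OF Zs, of "Suc t" n] tT by simp
          have e: "Re (trace (Ld w v (Suc t)) (Zs n (Suc t))) = Re (trace (ee (Suc t)) (V n (Suc t))) + real (v (Suc t)) * Re (trace (Ld w v t) (Zs n t))"
            using trace_rel[OF Zs, of "Suc t" n] tT by (simp add: V_def)
          have "real (v (Suc t)) * Re (trace (Ld w v t) (Zs n t)) \<le> real (v (Suc t)) * C"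
            using abs_le_D1[OF C[rule_format, of n]] by (intro mult_left_mono) auto
          moreover have "Re (trace (ee (Suc t)) (V n (Suc t))) \<le> Bt (Suc t)" using trb[of "Suc t" n] tT by auto
          moreover have "0 \<le> Re (trace (Ld w v (Suc t)) (Zs n (Suc t)))" by (rule psd_trace_nonneg[OF p])
          ultimately show ?thesis using e by linarith
        qed
        then show "\<exists>C. \<forall>n. \<bar>Re (trace (Ld w v (Suc t)) (Zs n (Suc t)))\<bar> \<le> C" by blast
      qed
    qed
  qed
  have cb: "\<forall>k\<in>Kset. \<exists>B. \<forall>n. cmod (Zs n (fst k) (fst (snd k)) (snd (snd k))) \<le> B"
  proof
    fix k assume k: "k \<in> Kset"
    obtain t a b where kk: "k = (t, a, b)" by (cases k) auto
    have tS: "t \<le> Suc T" and ab: "a \<in> basis (dd t)" "b \<in> basis (dd t)" using k kk by (auto simp: Kset_def)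
    have "\<exists>B. \<forall>n. cmod (Zs n t a b) \<le> B"
    proof (cases "t = 0")
      case True
      have "cmod (Zs n t a b) \<le> \<bar>mu\<bar> + Bt 1" for n
        using lb[of n] True Bt0[of 1] T1 by (simp add: Zs0 scalar1_def)
      then show ?thesis by blast
    next
      case t0: False
      show ?thesis
      proof (cases "t \<le> T")
        case True
        obtain C where C: "\<forall>n. \<bar>Re (trace (Ld w v t) (Zs n t))\<bar> \<le> C" using trbound True by blast
        have "cmod (Zs n t a b) \<le> 2 * C" for n
        proof -
          have p: "psd (Ld w v t) (Zs n t)" using Zset_psd[OF Zs, of t n] True t0 by simp
          have "Re (trace (Ld w v t) (Zs n t)) \<le> C" by (rule abs_le_D1[OF C[rule_format]])
          then show ?thesis using psd_entry_le_trace[OF p, of a b] by linarith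
        qed
        then show ?thesis by blast
      next
        case False
        then have tT: "t = Suc T" using tS by simp
        obtain C where C: "\<forall>n. \<bar>Re (trace (Ld w v T) (Zs n T))\<bar> \<le> C" using trbound by blast
        have ab': "a \<in> basis (ee (Suc T))" "b \<in> basis (ee (Suc T))" using ab tT by (auto simp: dd_def ee_def)
        have "cmod (Zs n t a b) \<le> 2 * C + cmod (X a b) + (m + 2)" for n
        proof -
          have p: "psd (Ld w v T) (Zs n T)" using Zset_psd[OF Zs, of T n] T1 by simp
          have e: "Zs n t a b = Zs n T a b - X a b - V n (Suc T) a b"
            using tT by (simp add: V_def Rr_def Rl_def)
          have "cmod (Zs n t a b) \<le> cmod (Zs n T a b) + cmod (X a b) + cmod (V n (Suc T) a b)"
            unfolding e using norm_triangle_ineq4[of "Zs n T a b - X a b" "V n (Suc T) a b"]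
              norm_triangle_ineq4[of "Zs n T a b" "X a b"] by linarith
          moreover have "cmod (Zs n T a b) \<le> 2 * C"
          proof -
            have "Re (trace (Ld w v T) (Zs n T)) \<le> C" by (rule abs_le_D1[OF C[rule_format]])
            then show ?thesis using psd_entry_le_trace[OF p, of a b] by linarith
          qed
          moreover have "cmod (V n (Suc T) a b) \<le> m + 2" using entb[of "Suc T" a b n] ab' by simp
          ultimately show ?thesis by linarith
        qed
        then show ?thesis by blast
      qed
    qed
    then show "\<exists>B. \<forall>n. cmod (Zs n (fst k) (fst (snd k)) (snd (snd k))) \<le> B" using kk by simp
  qed
  obtain r L where r: "strict_mono r" and L: "\<forall>k\<in>Kset. (\<lambda>n. Zs (r n) (fst k) (fst (snd k)) (snd (snd k))) \<longlonglongrightarrow> L k"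
    using BW_finite[OF finite_Kset cb] by blast
  define Zst where "Zst t a b = (if (t, a, b) \<in> Kset then L (t, a, b) else 0)" for t a b
  have TLZ: "TL (\<lambda>n. Zs (r n) t) (Zst t)" for t
    unfolding TL_def
  proof (intro allI)
    fix a b show "(\<lambda>n. Zs (r n) t a b) \<longlonglongrightarrow> Zst t a b"
    proof (cases "(t, a, b) \<in> Kset")
      case True then show ?thesis using L by (force simp: Zst_def)
    next
      case False then show ?thesis using Zset_out[OF Zs] by (simp add: Zst_def)
    qed
  qed
  have ZstZ: "Zst \<in> Zset"
  proof -
    define lst where "lst = Re (Zst 0 [] [])"
    have ll: "(\<lambda>n. l (r n)) \<longlonglongrightarrow> lst"
      unfolding l_def lst_def using TLZ[of 0] by (auto simp: TL_def intro: tendsto_Re)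
    have "lst \<le> mu" using ll Zs0(2) by (intro LIMSEQ_le_const2[OF ll]) auto
    moreover have "Zst 0 = osc lst scalar1"
    proof (intro ext)
      fix a b
      have "(\<lambda>n. Zs (r n) 0 a b) \<longlonglongrightarrow> Zst 0 a b" using TLZ[of 0] by (simp add: TL_def)
      moreover have "(\<lambda>n. Zs (r n) 0 a b) \<longlonglongrightarrow> complex_of_real lst * scalar1 a b"
        unfolding Zs0 osc_app by (intro tendsto_mult tendsto_of_real ll tendsto_const)
      ultimately show "Zst 0 a b = osc lst scalar1 a b" using LIMSEQ_unique by simp
    qed
    moreover have "\<forall>t\<in>{1..T}. psd (Ld w v t) (Zst t)"
    proof
      fix t assume t: "t \<in> {1..T}"
      show "psd (Ld w v t) (Zst t)"
        by (rule TL_psd[OF _ TLZ]) (use Zset_psd[OF Zs] t in auto)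
    qed
    moreover have "psd (Ld w v T) (Zst (Suc T))"
      by (rule TL_psd[OF _ TLZ]) (use Zset_psdS[OF Zs] in auto)
    moreover have "\<forall>t>Suc T. Zst t = zop"
      by (auto simp: Zst_def Kset_def zop_def intro!: ext)
    ultimately show ?thesis unfolding Zset_def by blast
  qed
  have TLR: "TL (\<lambda>n. Rr (Zs (r n)) t) (Rr Zst t)" for t
    unfolding Rr_def Rl_def
    by (auto intro!: TL_osub TL_ptr_head TL_idt TLZ TL_const)
  have fnlim: "(\<lambda>n. fn (Zs (r n))) \<longlonglongrightarrow> fn Zst"
    unfolding fn_def ip_def by (intro tendsto_sum TL_hs TLR)
  have "fn Zst \<le> m"
  proof (rule LIMSEQ_le[OF fnlim])
    show "(\<lambda>n. m + inverse (real (Suc n))) \<longlonglongrightarrow> m"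
      using tendsto_add[OF tendsto_const LIMSEQ_inverse_real_of_nat, of m] by simp
    show "\<exists>N. \<forall>n\<ge>N. fn (Zs (r n)) \<le> m + inverse (real (Suc n))"
    proof (intro exI allI impI)
      fix n
      have "n \<le> r n" using seq_suble[OF r] .
      then have "inverse (real (Suc (r n))) \<le> inverse (real (Suc n))"
        by (simp add: le_imp_inverse_le)
      then show "fn (Zs (r n)) \<le> m + inverse (real (Suc n))" using Zsf[of "r n"] by linarith
    qed
  qed
  then have fm: "fn Zst = m" using m_le[OF ZstZ] by simp
  show ?thesis
  proof (cases "m = 0")
    case True
    have "\<forall>t. Rr Zst t = zop"
    proof
      fix t show "Rr Zst t = zop"
      proof (cases "t \<in> {1..Suc T}")
        case True
        have h: "\<forall>t\<in>{1..Suc T}. herm (ee t) (Rr Zst t)" using herm_Rr[OF ZstZ] by blast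
        have "hs (ee t) (Rr Zst t) (Rr Zst t) \<le> 0"
          using ip_self_slot[OF h True] fm \<open>m = 0\<close> by (simp add: fn_def)
        then have "hs (ee t) (Rr Zst t) (Rr Zst t) = 0" using hs_self_nonneg h True by (meson order_antisym)
        then show ?thesis using hs_self_zero h True by blast
      next
        case False
        then have "t = 0 \<or> t > Suc T" by auto
        then show ?thesis by (auto simp: Rr_def Rl_def)
      qed
    qed
    then show ?thesis using ZstZ by blast
  next
    case False
    then have m0: "0 < m" using fm fn_nonneg[OF ZstZ] by simp
    have "m \<le> ip (Rr Zst) (Rr Z)" if Z: "Z \<in> Zset" for Z
    proof (rule cond_real_ineq)
      fix u :: real assume u: "0 \<le> u" "u \<le> 1"
      have "m \<le> fn (Zc u Zst Z)" by (rule m_le[OF Zc_Zset[OF ZstZ Z u]])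
      also have "fn (Zc u Zst Z) = (1 - u) * (1 - u) * ip (Rr Zst) (Rr Zst) + 2 * (1 - u) * u * ip (Rr Zst) (Rr Z) + u * u * ip (Rr Z) (Rr Z)"
        unfolding fn_def Rr_Zc by (rule ip_comb)
      finally show "m \<le> (1 - u) * (1 - u) * m + 2 * (1 - u) * u * ip (Rr Zst) (Rr Z) + u * u * ip (Rr Z) (Rr Z)"
        using fm by (simp add: fn_def)
    qed
    then show ?thesis using m0 herm_Rr[OF ZstZ] by blast
  qed
qed

end


lemma ptr_head_idt: "ptr_head d (idt d Y) = osc (real d) Y"
  by (intro ext) (simp add: ptr_head_def idt_def)

lemma osub_zop_left_osc: "osub zop (osc (-1) Y) = Y"
  by (intro ext) simp

lemma hs_osub_zop: "hs ds A (osub zop B) = - hs ds A B"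
  using hs_sub2[of ds A zop B] by simp

lemma hs_tester1:
  "hs [v1] t1 (idt v1 (osc l scalar1)) = l * Re (trace [v1] t1)"
proof -
  have "hs [v1] t1 (idt v1 (osc l scalar1)) = hs [] (osc l scalar1) (ptr_head v1 t1)"
    by (subst hs_sym) (rule hs_idt)
  also have "\<dots> = l * Re (ptr_head v1 t1 [] [])" by (rule hs_scalar1)
  also have "\<dots> = l * Re (trace [v1] t1)"
    by (simp add: ptr_head_def trace_def sum_basis_Cons)
  finally show ?thesis .
qed

fun sgf :: "(nat \<Rightarrow> nat) \<Rightarrow> (nat \<Rightarrow> nat) \<Rightarrow> (nat \<Rightarrow> op) \<Rightarrow> nat \<Rightarrow> op" where
  "sgf w v tp 0 = tp 1"
| "sgf w v tp (Suc k) = oadd (tp (Suc (Suc k))) (osc (1 / real (v (Suc (Suc k))))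
      (idt (v (Suc (Suc k))) (osub (idt (w (Suc k)) (sgf w v tp k)) (ptr_head (v (Suc (Suc k))) (tp (Suc (Suc k)))))))"

context sep begin

lemma Rr_add: "Rr (\<lambda>t. oadd (Z1 t) (osc s (E t))) t = oadd (Rr Z1 t) (osc s (Rl E t))"
  by (intro ext) (simp add: Rr_def Rl_def ptr_head_oadd ptr_head_osc idt_oadd idt_osc algebra_simps)

lemma ip_add2: "ip W (\<lambda>t. oadd (A t) (osc s (B t))) = ip W A + s * ip W B"
  unfolding ip_def hs_add2 hs_sc2 by (simp only: sum.distrib sum_distrib_left)

lemma ip_one: "k \<in> {1..Suc T} \<Longrightarrow> (\<And>t. t \<in> {1..Suc T} \<Longrightarrow> t \<noteq> k \<Longrightarrow> V t = zop) \<Longrightarrow>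
   ip W V = hs (ee k) (W k) (V k)"
  unfolding ip_def by (subst sum.remove[of _ k]) (auto intro!: sum.neutral)

lemma ip_two: "k1 \<in> {1..Suc T} \<Longrightarrow> k2 \<in> {1..Suc T} \<Longrightarrow> k1 \<noteq> k2 \<Longrightarrow>
   (\<And>t. t \<in> {1..Suc T} \<Longrightarrow> t \<noteq> k1 \<Longrightarrow> t \<noteq> k2 \<Longrightarrow> V t = zop) \<Longrightarrow>
   ip W V = hs (ee k1) (W k1) (V k1) + hs (ee k2) (W k2) (V k2)"
proof -
  assume k: "k1 \<in> {1..Suc T}" "k2 \<in> {1..Suc T}" "k1 \<noteq> k2"
    and z: "\<And>t. t \<in> {1..Suc T} \<Longrightarrow> t \<noteq> k1 \<Longrightarrow> t \<noteq> k2 \<Longrightarrow> V t = zop"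
  have "ip W V = hs (ee k1) (W k1) (V k1) + (\<Sum>t\<in>{1..Suc T} - {k1}. hs (ee t) (W t) (V t))"
    unfolding ip_def using k by (subst sum.remove[of _ k1]) auto
  also have "(\<Sum>t\<in>{1..Suc T} - {k1}. hs (ee t) (W t) (V t)) = hs (ee k2) (W k2) (V k2) + (\<Sum>t\<in>{1..Suc T} - {k1} - {k2}. hs (ee t) (W t) (V t))"
    using k by (subst sum.remove[of _ k2]) auto
  also have "(\<Sum>t\<in>{1..Suc T} - {k1} - {k2}. hs (ee t) (W t) (V t)) = 0"
    using z by (intro sum.neutral) auto
  finally show ?thesis by simp
qed

lemma lin_test:
  assumes sep: "\<forall>Z\<in>Zset. \<delta> \<le> ip W (Rr Z)" and d0: "0 < \<delta>"
    and Z1: "\<And>s. 0 \<le> s \<Longrightarrow> (\<lambda>t. oadd (Z1 t) (osc s (E t))) \<in> Zset"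
  shows "0 \<le> ip W (Rl E)"
proof (rule ccontr)
  assume "\<not> 0 \<le> ip W (Rl E)"
  then have e: "ip W (Rl E) < 0" by simp
  define c where "c = ip W (Rr Z1)"
  define s where "s = (\<bar>c\<bar> + 1) / (- ip W (Rl E))"
  have s0: "0 \<le> s" unfolding s_def by (rule divide_nonneg_pos) (use e in auto)
  have "\<delta> \<le> ip W (Rr (\<lambda>t. oadd (Z1 t) (osc s (E t))))" using sep Z1[OF s0] by blast
  also have "\<dots> = c + s * ip W (Rl E)"
    unfolding Rr_add ip_add2 c_def ..
  also have "s * ip W (Rl E) = - (\<bar>c\<bar> + 1)" using e by (simp add: s_def)
  finally show False using d0 by linarith
qed

lemma psd_ext_eq: "psd ds A \<Longrightarrow> A = B \<Longrightarrow> psd ds B" by simp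

theorem exists_chain:
  assumes Xpsd: "psd (Ld w v T) X"
    and muub: "\<forall>s\<in>SG w v T. hs (Ld w v T) s X \<le> mu"
  shows "\<exists>l Y. chainP w v T l Y \<and> l \<le> mu \<and> psd (Ld w v T) (osub (Y T) X)"
proof -
  note dichot = sep_main
  show ?thesis
  proof (cases "\<exists>Z\<in>Zset. \<forall>t. Rr Z t = zop")
    case True
    then obtain Z where Z: "Z \<in> Zset" and R0: "\<And>t. Rr Z t = zop" by blast
    obtain l where l: "l \<le> mu" "Z 0 = osc l scalar1" using Z by (auto simp: Zset_def)
    have eqs: "ptr_head (w t) (Z t) = idt (v t) (Z (t - 1))" if t: "t \<in> {1..T}" for t
    proof (intro ext)
      fix a b
      have "Rr Z t a b = 0" using R0 by simp
      then show "ptr_head (w t) (Z t) a b = idt (v t) (Z (t - 1)) a b" using t by (simp add: Rr_def Rl_def)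
    qed
    have "chainP w v T l Z" unfolding chainP_def chainE_def using l eqs Zset_psd[OF Z] by auto
    moreover have "osub (Z T) X = Z (Suc T)"
    proof (intro ext)
      fix a b
      have "Rr Z (Suc T) a b = 0" using R0 by simp
      then have "Z T a b - Z (Suc T) a b - X a b = 0" by (simp add: Rr_def Rl_def)
      then show "osub (Z T) X a b = Z (Suc T) a b" by (simp add: algebra_simps)
    qed
    ultimately have "chainP w v T l Z \<and> l \<le> mu \<and> psd (Ld w v T) (osub (Z T) X)"
      using l Zset_psdS[OF Z] by simp
    then show ?thesis by blast
  next
    case False
    then obtain W \<delta> where d0: "0 < \<delta>" and hW: "\<forall>t\<in>{1..Suc T}. herm (ee t) (W t)"
      and sep: "\<forall>Z\<in>Zset. \<delta> \<le> ip W (Rr Z)" using dichot by blast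
    define G where "G = W (Suc T)"
    define H where "H = osub zop G"
    have hG: "herm (Ld w v T) G" using hW[rule_format, of "Suc T"] by (simp add: G_def ee_def)
    have hH: "herm (Ld w v T) H" unfolding H_def by (intro herm_osub herm_zop hG)
    have hT: "herm (Td w v t) (W t)" if "t \<in> {1..T}" for t using hW[rule_format, of t] that by (simp add: ee_def)
    have Hpsd: "psd (Ld w v T) H"
    proof (rule psd_dualI[OF hH])
      fix p assume p: "psd (Ld w v T) p"
      define E where "E = (\<lambda>t. if t = Suc T then p else zop)"
      have "0 \<le> ip W (Rl E)"
      proof (rule lin_test[OF sep d0])
        fix s :: real assume "0 \<le> s"
        then show "(\<lambda>t. oadd (Zb t) (osc s (E t))) \<in> Zset"
          unfolding Zset_def Zb_def E_def using p by (auto simp: psd_zop psd_osc)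
      qed
      also have "ip W (Rl E) = hs (ee (Suc T)) (W (Suc T)) (Rl E (Suc T))"
        by (rule ip_one) (auto simp: Rl_def E_def)
      also have "\<dots> = - hs (Ld w v T) G p"
        by (simp add: Rl_def E_def ee_def G_def hs_osub_zop)
      finally show "0 \<le> hs (Ld w v T) H p" unfolding H_def hs_sub1 by simp
    qed
    define Q where "Q k = (if k = T then osub (idt (w T) (W T)) H
        else osub (idt (w k) (W k)) (ptr_head (v (Suc k)) (W (Suc k))))" for k
    have Qpsd: "psd (Ld w v k) (Q k)" if k: "k \<in> {1..T}" for k
    proof -
      have k1: "1 \<le> k" "k \<le> T" using k by auto
      have hQ: "herm (Ld w v k) (Q k)"
      proof (cases "k = T")
        case True
        then show ?thesis unfolding Q_def using hH hT[OF k] Ld_eq[OF k1(1)] by (auto intro!: herm_osub herm_idt)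
      next
        case False
        have "Suc k \<in> {1..T}" using k False by auto
        then have "herm (v (Suc k) # Ld w v k) (W (Suc k))" using hT Td_Suc by metis
        then show ?thesis unfolding Q_def using False hT[OF k] Ld_eq[OF k1(1)]
          by (auto intro!: herm_osub herm_idt herm_ptr_head)
      qed
      show ?thesis
      proof (rule psd_dualI[OF hQ])
        fix p assume p: "psd (Ld w v k) p"
        define E where "E = (\<lambda>t. if t = k then p else zop)"
        have "0 \<le> ip W (Rl E)"
        proof (rule lin_test[OF sep d0])
          fix s :: real assume s: "0 \<le> s"
          show "(\<lambda>t. oadd (Zb t) (osc s (E t))) \<in> Zset"
            unfolding Zset_def Zb_def E_def using p k s by (auto simp: psd_zop psd_osc)
        qed
        have hs1: "hs (Td w v k) (W k) (ptr_head (w k) p) = hs (Ld w v k) (idt (w k) (W k)) p"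
          using hs_idt[of "w k" "Td w v k" "W k" p] Ld_eq[OF k1(1)] by simp
        have km: "k - 1 \<noteq> k" using k1 by simp
        show "0 \<le> hs (Ld w v k) (Q k) p"
        proof (cases "k = T")
          case True
          have "ip W (Rl E) = hs (ee k) (W k) (Rl E k) + hs (ee (Suc T)) (W (Suc T)) (Rl E (Suc T))"
            by (rule ip_two) (use k True in \<open>auto simp: Rl_def E_def\<close>)
          also have "\<dots> = hs (Td w v k) (W k) (ptr_head (w k) p) + hs (Ld w v T) G p"
            using True k1 km by (simp add: Rl_def E_def ee_def G_def)
          finally have "0 \<le> hs (Td w v k) (W k) (ptr_head (w k) p) + hs (Ld w v T) G p"
            using \<open>0 \<le> ip W (Rl E)\<close> by simp
          then show ?thesis unfolding Q_def using True hs1 by (simp add: H_def hs_sub1)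
        next
          case False
          have kS: "Suc k \<le> T" using False k1 by simp
          have "ip W (Rl E) = hs (ee k) (W k) (Rl E k) + hs (ee (Suc k)) (W (Suc k)) (Rl E (Suc k))"
            by (rule ip_two) (use k kS in \<open>auto simp: Rl_def E_def\<close>)
          also have "\<dots> = hs (Td w v k) (W k) (ptr_head (w k) p) - hs (Td w v (Suc k)) (W (Suc k)) (idt (v (Suc k)) p)"
            using kS k1 km by (simp add: Rl_def E_def ee_def hs_osub_zop)
          also have "hs (Td w v (Suc k)) (W (Suc k)) (idt (v (Suc k)) p) = hs (Ld w v k) (ptr_head (v (Suc k)) (W (Suc k))) p"
            unfolding Td_Suc by (subst hs_sym, subst hs_idt, rule hs_sym)
          finally show ?thesis unfolding Q_def using False hs1 \<open>0 \<le> ip W (Rl E)\<close> by (simp add: hs_sub1)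
        qed
      qed
    qed
    define \<alpha> where "\<alpha> = Re (trace (Td w v 1) (W 1))"
    have base: "\<delta> \<le> - mu * \<alpha> + hs (Ld w v T) H X"
    proof -
      have "\<delta> \<le> ip W (Rr Zb)" using sep Zb_Zset by blast
      also have "ip W (Rr Zb) = hs (ee 1) (W 1) (Rr Zb 1) + hs (ee (Suc T)) (W (Suc T)) (Rr Zb (Suc T))"
        by (rule ip_two) (use T1 in \<open>auto simp: Rr_def Rl_def Zb_def\<close>)
      also have "hs (ee 1) (W 1) (Rr Zb 1) = - (mu * \<alpha>)"
        using T1 hs_tester1[of "v 1" "W 1" mu]
        by (simp add: Rr_def Rl_def Zb_def ee_def Td_def \<alpha>_def hs_osub_zop)
      also have "hs (ee (Suc T)) (W (Suc T)) (Rr Zb (Suc T)) = hs (Ld w v T) H X"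
        using T1 by (simp add: Rr_def Rl_def Zb_def ee_def G_def H_def hs_osub_zop hs_sub1)
      finally show ?thesis by simp
    qed
    have Wpsd: "psd (Td w v k) (W k)" if k: "k \<in> {1..T}" for k
    proof -
      have all: "\<forall>j. j < T \<longrightarrow> psd (Td w v (T - j)) (W (T - j))"
      proof (intro allI)
        fix j show "j < T \<longrightarrow> psd (Td w v (T - j)) (W (T - j))"
        proof (induction j)
          case 0
          show ?case
          proof
            have e: "idt (w T) (W T) = oadd (Q T) H" by (intro ext) (simp add: Q_def)
            have "psd (Ld w v T) (idt (w T) (W T))" unfolding e using Qpsd[of T] T1 Hpsd by (auto intro: psd_oadd)
            then have "psd (w T # Td w v T) (idt (w T) (W T))" using Ld_eq[OF T1] by simp
            moreover have "1 \<le> w T" using dims T1 by auto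
            ultimately have "psd (Td w v T) (W T)" by (rule psd_idt_rev)
            then show "psd (Td w v (T - 0)) (W (T - 0))" by simp
          qed
        next
          case (Suc j)
          show ?case
          proof
            assume jT: "Suc j < T"
            define k where "k = T - Suc j"
            have k1: "1 \<le> k" "k < T" "Suc k = T - j" using jT by (auto simp: k_def)
            have pS: "psd (Td w v (Suc k)) (W (Suc k))" using Suc jT k1 by auto
            have e: "idt (w k) (W k) = oadd (Q k) (ptr_head (v (Suc k)) (W (Suc k)))"
              using k1 by (intro ext) (simp add: Q_def)
            have "psd (Ld w v k) (idt (w k) (W k))" unfolding e
              using Qpsd[of k] k1 psd_ptr_head[OF pS[unfolded Td_Suc]] by (auto intro: psd_oadd)
            then have "psd (w k # Td w v k) (idt (w k) (W k))" using Ld_eq[OF k1(1)] by simp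
            moreover have "1 \<le> w k" using dims k1 by auto
            ultimately have "psd (Td w v k) (W k)" by (rule psd_idt_rev)
            then show "psd (Td w v (T - Suc j)) (W (T - Suc j))" by (simp add: k_def)
          qed
        qed
      qed
      have "T - k < T" "T - (T - k) = k" using k by auto
      then show ?thesis using all by metis
    qed
    define al where "al k = Re (trace (Td w v k) (W k))" for k
    have al0: "0 \<le> al k" if "k \<in> {1..T}" for k unfolding al_def by (rule psd_trace_nonneg[OF Wpsd[OF that]])
    have trQ: "al (Suc k) \<le> real (w k) * al k" if k: "1 \<le> k" "k < T" for k
    proof -
      have "0 \<le> Re (trace (Ld w v k) (Q k))" using Qpsd[of k] k by (intro psd_trace_nonneg) auto
      moreover have "trace (Ld w v k) (Q k) = of_nat (w k) * trace (Td w v k) (W k) - trace (Td w v (Suc k)) (W (Suc k))"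
        using k by (simp add: Q_def trace_osub Ld_eq[OF k(1)] trace_idt trace_ptr_head Td_Suc)
      ultimately show ?thesis by (simp add: al_def)
    qed
    have trQT: "Re (trace (Ld w v T) H) \<le> real (w T) * al T"
    proof -
      have "0 \<le> Re (trace (Ld w v T) (Q T))" using Qpsd[of T] T1 by (intro psd_trace_nonneg) auto
      moreover have "trace (Ld w v T) (Q T) = of_nat (w T) * trace (Td w v T) (W T) - trace (Ld w v T) H"
        using T1 by (simp add: Q_def trace_osub Ld_eq[OF T1] trace_idt)
      ultimately show ?thesis by (simp add: al_def)
    qed
    have alpha1: "\<alpha> = al 1" by (simp add: al_def \<alpha>_def)
    show ?thesis
    proof (cases "\<alpha> = 0")
      case True
      have "\<forall>k. 1 \<le> k \<and> k \<le> T \<longrightarrow> al k = 0"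
      proof (intro allI)
        fix k show "1 \<le> k \<and> k \<le> T \<longrightarrow> al k = 0"
        proof (induction k)
          case 0 then show ?case by simp
        next
          case (Suc k)
          show ?case
          proof
            assume kk: "1 \<le> Suc k \<and> Suc k \<le> T"
            show "al (Suc k) = 0"
            proof (cases "k = 0")
              case True then show ?thesis using \<open>\<alpha> = 0\<close> alpha1 by simp
            next
              case False
              have "al k = 0" using Suc kk False by auto
              then have "al (Suc k) \<le> 0" using trQ[of k] kk False by simp
              moreover have "0 \<le> al (Suc k)" using al0 kk by auto
              ultimately show ?thesis by simp
            qed
          qed
        qed
      qed
      then have "al T = 0" using T1 by blast
      then have "Re (trace (Ld w v T) H) \<le> 0" using trQT by simp
      moreover have "0 \<le> Re (trace (Ld w v T) H)" by (rule psd_trace_nonneg[OF Hpsd])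
      ultimately have "H = zop" using psd_trace0[OF Hpsd] by simp
      then have "\<delta> \<le> 0" using base True by simp
      then show ?thesis using d0 by simp
    next
      case False
      then have a0: "0 < \<alpha>" using al0[of 1] alpha1 T1 by simp
      define tp where "tp k = osc (1 / \<alpha>) (W k)" for k
      define Q' where "Q' k = osc (1 / \<alpha>) (Q k)" for k
      have Q'psd: "psd (Ld w v k) (Q' k)" if "k \<in> {1..T}" for k
        unfolding Q'_def using Qpsd[OF that] a0 by (intro psd_osc) auto
      have Q'eq: "Q' k = osub (idt (w k) (tp k)) (ptr_head (v (Suc k)) (tp (Suc k)))" if "k < T" for k
        using that by (intro ext) (simp add: Q'_def Q_def tp_def ptr_head_def idt_def sum_distrib_left right_diff_distrib split: list.splits)
      have Q'eqT: "Q' T = osub (idt (w T) (tp T)) (osc (1 / \<alpha>) H)"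
        by (intro ext) (simp add: Q'_def Q_def tp_def idt_def right_diff_distrib split: list.splits)
      have tppsd: "psd (Td w v k) (tp k)" if "k \<in> {1..T}" for k
        unfolding tp_def using Wpsd[OF that] a0 by (intro psd_osc) auto
      define sg where "sg t = sgf w v tp (t - 1)" for t
      have sgprop: "\<forall>j. Suc j \<le> T \<longrightarrow> psd (Td w v (Suc j)) (osub (sg (Suc j)) (tp (Suc j))) \<and> psd (Td w v (Suc j)) (sg (Suc j))"
      proof (intro allI)
        fix j show "Suc j \<le> T \<longrightarrow> psd (Td w v (Suc j)) (osub (sg (Suc j)) (tp (Suc j))) \<and> psd (Td w v (Suc j)) (sg (Suc j))"
        proof (induction j)
          case 0
          show ?case
          proof
            assume "Suc 0 \<le> T"
            have "osub (sg 1) (tp 1) = zop" by (intro ext) (simp add: sg_def)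
            moreover have "sg 1 = tp 1" by (simp add: sg_def)
            ultimately show "psd (Td w v (Suc 0)) (osub (sg (Suc 0)) (tp (Suc 0))) \<and> psd (Td w v (Suc 0)) (sg (Suc 0))"
              using tppsd[of 1] T1 by (simp add: psd_zop)
          qed
        next
          case (Suc j)
          show ?case
          proof
            assume jT: "Suc (Suc j) \<le> T"
            define t where "t = Suc j"
            have t1: "1 \<le> t" "t < T" using jT by (auto simp: t_def)
            have "Suc j \<le> T" using jT by simp
            then have D: "psd (Td w v t) (osub (sg t) (tp t))" using Suc.IH unfolding t_def by blast
            define M where "M = osub (idt (w t) (sg t)) (ptr_head (v (Suc t)) (tp (Suc t)))"
            have Meq: "M = oadd (idt (w t) (osub (sg t) (tp t))) (Q' t)"
              unfolding M_def Q'eq[OF t1(2)] by (intro ext) (simp add: idt_osub)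
            have Mpsd: "psd (Ld w v t) M" unfolding Meq Ld_eq[OF t1(1)]
              using psd_idt[OF D] Q'psd[of t] t1 Ld_eq[OF t1(1)] by (intro psd_oadd) auto
            have sgS: "sg (Suc t) = oadd (tp (Suc t)) (osc (1 / real (v (Suc t))) (idt (v (Suc t)) M))"
              by (simp add: sg_def t_def M_def)
            have De: "osub (sg (Suc t)) (tp (Suc t)) = osc (1 / real (v (Suc t))) (idt (v (Suc t)) M)"
              unfolding sgS by (intro ext) simp
            have Dpsd: "psd (Td w v (Suc t)) (osub (sg (Suc t)) (tp (Suc t)))"
              unfolding De Td_Suc by (intro psd_osc psd_idt Mpsd) simp
            have "psd (Td w v (Suc t)) (sg (Suc t))"
              unfolding sgS using tppsd[of "Suc t"] t1 Dpsd[unfolded De] by (intro psd_oadd) auto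
            then show "psd (Td w v (Suc (Suc j))) (osub (sg (Suc (Suc j))) (tp (Suc (Suc j)))) \<and> psd (Td w v (Suc (Suc j))) (sg (Suc (Suc j)))"
              using Dpsd by (simp add: t_def)
          qed
        qed
      qed
      have sgeq: "ptr_head (v t) (sg t) = idt (w (t - 1)) (sg (t - 1))" if t: "t \<in> {2..T}" for t
      proof -
        obtain j where j: "t = Suc (Suc j)" using t by (cases t; cases "t - 1") auto
        have v1: "1 \<le> v t" using dims t by auto
        have "ptr_head (v t) (sg t) = oadd (ptr_head (v t) (tp t)) (osc (1 / real (v t) * real (v t))
            (osub (idt (w (Suc j)) (sg (Suc j))) (ptr_head (v t) (tp t))))"
          by (simp add: sg_def j ptr_head_oadd ptr_head_osc ptr_head_idt osc_osc)
        also have "\<dots> = idt (w (t - 1)) (sg (t - 1))"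
          using v1 by (intro ext) (simp add: j)
        finally show ?thesis .
      qed
      have tr1: "trace (Td w v 1) (sg 1) = 1"
      proof -
        have "trace (Td w v 1) (W 1) = complex_of_real \<alpha>"
          using psd_trace_real[OF Wpsd[of 1]] T1 by (simp add: \<alpha>_def)
        then show ?thesis using a0 by (simp add: sg_def tp_def trace_def sum_divide_distrib[symmetric])
      qed
      have tst: "testerP w v T sg"
        unfolding testerP_def using sgprop tr1 sgeq
        by (auto simp del: sgf.simps) (metis Suc_le_D atLeastAtMost_iff Suc_le_eq)
      have sSG: "idt (w T) (sg T) \<in> SG w v T" unfolding SG_eq using tst by blast
      have le: "hs (Ld w v T) (idt (w T) (sg T)) X \<le> mu" using muub sSG by blast
      have dec: "osub (idt (w T) (sg T)) (osc (1 / \<alpha>) H) = oadd (idt (w T) (osub (sg T) (tp T))) (Q' T)"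
        unfolding Q'eqT by (intro ext) (simp add: idt_osub)
      have dpsd: "psd (Ld w v T) (oadd (idt (w T) (osub (sg T) (tp T))) (Q' T))"
      proof -
        obtain j where j: "T = Suc j" using T1 by (cases T) auto
        have "psd (Td w v T) (osub (sg T) (tp T))" using sgprop j by auto
        then show ?thesis unfolding Ld_eq[OF T1] using Q'psd[of T] T1 Ld_eq[OF T1]
          by (intro psd_oadd psd_idt) auto
      qed
      have "0 \<le> hs (Ld w v T) (osub (idt (w T) (sg T)) (osc (1 / \<alpha>) H)) X"
        unfolding dec by (rule psd_pairing[OF dpsd Xpsd])
      then have ge: "(1 / \<alpha>) * hs (Ld w v T) H X \<le> hs (Ld w v T) (idt (w T) (sg T)) X"
        by (simp add: hs_sub1 hs_sc1)
      have "mu * \<alpha> < hs (Ld w v T) H X" using base d0 by simp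
      then have "mu < (1 / \<alpha>) * hs (Ld w v T) H X" using a0 by (simp add: field_simps)
      then show ?thesis using ge le by simp
    qed
  qed
qed

end


lemma SG_psd: "s \<in> SG w v T \<Longrightarrow> 1 \<le> T \<Longrightarrow> psd (Ld w v T) s"
proof -
  assume s: "s \<in> SG w v T" and T1: "1 \<le> T"
  obtain \<tau> where st: "s = idt (w T) (\<tau> T)" and tp: "testerP w v T \<tau>" using s unfolding SG_eq by blast
  have "psd (Td w v T) (\<tau> T)" using tp T1 by (auto simp: testerP_def)
  then show ?thesis unfolding st Ld_eq[OF T1] by (rule psd_idt)
qed

lemma SG_chain: "s \<in> SG w v T \<Longrightarrow> 1 \<le> T \<Longrightarrow> chainE w v T l Y \<Longrightarrow> hs (Ld w v T) s (Y T) = l"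
proof -
  assume s: "s \<in> SG w v T" and T1: "1 \<le> T" and ce: "chainE w v T l Y"
  obtain \<tau> where st: "s = idt (w T) (\<tau> T)" and tp: "testerP w v T \<tau>" using s unfolding SG_eq by blast
  show ?thesis unfolding st by (rule chain_identity[OF tp ce T1 order_refl])
qed

theorem corollary1:
  fixes T M J :: nat and w v :: "nat \<Rightarrow> nat"
    and c :: tup and a :: "nat \<Rightarrow> tup" and b :: "nat \<Rightarrow> real"
    and Tset C :: "tup set" and S :: "op set"
    and chi0 :: op and q :: "nat \<Rightarrow> real"
  assumes "T \<ge> 1" and "M \<ge> 2"
    and "\<forall>t\<in>{1..T}. 1 \<le> v t \<and> 1 \<le> w t"
    and "\<forall>m<M. herm (Ld w v T) (c m)"
    and "\<forall>j<J. \<forall>m<M. herm (Ld w v T) (a j m)"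
    and "Tset \<noteq> {}" and "convex_tup Tset" and "Tset \<subseteq> TG w v T M"
    and "closure {\<Phi>\<in>Tset. \<forall>j<J. tinner (Ld w v T) M \<Phi> (a j) - b j \<le> 0}
         = {\<Phi>\<in>closure Tset. \<forall>j<J. tinner (Ld w v T) M \<Phi> (a j) - b j \<le> 0}"
    and "closed C" and "convex_tup C" and "cone_tup C" and "C \<subseteq> CG w v T M"
    and "S = SG w v T"
    and "closure Tset = {\<Phi>\<in>C. opsum M \<Phi> \<in> S}"
    and "opt_D (Ld w v T) M J c a b C S (chi0, q)"
  shows "\<exists>chi. opt_D (Ld w v T) M J c a b C S (chi, q) \<and> chi \<in> lin_span (Chn w v T)"
proof -
  note T1 = assms(1) and dims = assms(3) and SS = assms(14) and opt = assms(16)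
  define ds where "ds = Ld w v T"
  have D0: "(chi0, q) \<in> Dset ds M J c a C" and opt0: "\<forall>p'\<in>Dset ds M J c a C. DS ds S J b chi0 q \<le> DS ds S J b (fst p') (snd p')"
    using opt by (auto simp: opt_D_def ds_def)
  have hchi0: "herm ds chi0" using D0 by (simp add: Dset_def)
  obtain \<Phi>0 where "\<Phi>0 \<in> Tset" using assms(6) by blast
  then have "opsum M \<Phi>0 \<in> SG w v T" using assms(8) by (auto simp: TG_def)
  then have SGne: "SG w v T \<noteq> {}" by blast
  define c0T where "c0T = c0 w v T"
  have c0ch: "chainP w v T 1 (c0 w v)" using c0_chainP dims by auto
  have kp: "kap w T > 0" using kap_pos[of T w] dims by auto
  have c0T_eq: "c0T = osc (kap w T) (idop ds)" by (simp add: c0T_def c0_def ds_def)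
  have hc0: "hs ds s c0T = 1" if "s \<in> SG w v T" for s
    using SG_chain[OF that T1, of 1 "c0 w v"] c0ch by (simp add: chainP_def c0T_def ds_def)
  obtain k where k: "psd ds (osub (osc k (idop ds)) chi0)" using herm_upper_bound[OF hchi0] by blast
  have ub: "hs ds s chi0 \<le> k / kap w T" if s: "s \<in> SG w v T" for s
  proof -
    have e: "osc k (idop ds) = osc (k / kap w T) c0T" using kp by (simp add: c0T_eq osc_osc)
    have "0 \<le> hs ds s (osub (osc k (idop ds)) chi0)"
      using psd_pairing[OF SG_psd[OF s T1, folded ds_def] k] .
    then show ?thesis unfolding e hs_sub2 hs_sc2 hc0[OF s] by simp
  qed
  have bdd: "bdd_above ((\<lambda>\<phi>. hs ds \<phi> chi0) ` SG w v T)" using ub by (intro bdd_aboveI[where M="k / kap w T"]) auto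
  obtain k' where k': "psd ds (osub (osc k' (idop ds)) (osub zop chi0))"
    using herm_upper_bound[OF herm_osub[OF herm_zop hchi0]] by blast
  define \<beta> where "\<beta> = k' / kap w T"
  define X where "X = oadd chi0 (osc \<beta> c0T)"
  have Xe: "X = osub (osc k' (idop ds)) (osub zop chi0)"
    using kp by (intro ext) (simp add: X_def \<beta>_def c0T_eq)
  have Xpsd: "psd ds X" using k' Xe by simp
  define mu0 where "mu0 = lamS ds S chi0"
  have mu0e: "mu0 = Sup ((\<lambda>\<phi>. hs ds \<phi> chi0) ` SG w v T)" by (simp add: mu0_def lamS_def SS)
  define mu where "mu = mu0 + \<beta>"
  have muub: "\<forall>s\<in>SG w v T. hs ds s X \<le> mu"
  proof
    fix s assume s: "s \<in> SG w v T"
    have "hs ds s chi0 \<le> mu0" unfolding mu0e using bdd s by (rule cSUP_upper2) simp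
    then show "hs ds s X \<le> mu" unfolding X_def hs_add2 hs_sc2 hc0[OF s] mu_def by simp
  qed
  interpret sep w v T X mu
    using T1 dims psd_herm[OF Xpsd] by (unfold_locales) (auto simp: ds_def)
  obtain l Y where ch: "chainP w v T l Y" and lmu: "l \<le> mu" and YX: "psd ds (osub (Y T) X)"
    using exists_chain[OF Xpsd[unfolded ds_def]] muub by (auto simp: ds_def)
  define chi where "chi = osub (Y T) (osc \<beta> c0T)"
  have diff: "osub chi chi0 = osub (Y T) X" by (intro ext) (simp add: chi_def X_def)
  have dpsd: "psd ds (osub chi chi0)" using diff YX by simp
  have hYT: "herm ds (Y T)" using ch T1 psd_herm by (auto simp: chainP_def ds_def)
  have hc0T: "herm ds c0T" unfolding c0T_eq by (intro herm_osc herm_idop)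
  have hchi: "herm ds chi" unfolding chi_def by (intro herm_osub hYT herm_osc hc0T)
  have hsc: "hs ds s chi = l - \<beta>" if s: "s \<in> SG w v T" for s
  proof -
    have "hs ds s (Y T) = l" using SG_chain[OF s T1, of l Y] ch by (simp add: chainP_def ds_def)
    then show ?thesis unfolding chi_def hs_sub2 hs_sc2 hc0[OF s] by simp
  qed
  have lamchi: "lamS ds S chi = l - \<beta>"
  proof -
    have "(\<lambda>\<phi>. hs ds \<phi> chi) ` SG w v T = {l - \<beta>}" using hsc SGne by auto
    then show ?thesis by (simp add: lamS_def SS)
  qed
  have lamle: "lamS ds S chi \<le> lamS ds S chi0" using lamchi lmu by (simp add: mu_def mu0_def)
  define k1 where "k1 = \<bar>l\<bar> + 1"
  have lk: "0 < l + k1" by (simp add: k1_def)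
  define Y1 where "Y1 = (\<lambda>t. osc (1 / (l + k1)) (oadd (Y t) (osc k1 (c0 w v t))))"
  have "chainP w v T (l + k1 * 1) (\<lambda>t. oadd (Y t) (osc k1 (c0 w v t)))"
    by (intro chainP_add ch chainP_sc c0ch) (simp add: k1_def)
  then have "chainP w v T (1 / (l + k1) * (l + k1 * 1)) Y1"
    unfolding Y1_def using lk by (intro chainP_sc) auto
  then have "chainP w v T 1 Y1" using lk by simp
  then have c1: "Y1 T \<in> Chn w v T" by (rule chainP_Chn[OF _ T1])
  have c0C: "c0T \<in> Chn w v T" unfolding c0T_def by (rule chainP_Chn[OF c0ch T1])
  have lk2: "complex_of_real k1 + complex_of_real l \<noteq> 0" "complex_of_real l + complex_of_real k1 \<noteq> 0"
  proof -
    have ne: "l + k1 \<noteq> 0" "k1 + l \<noteq> 0" using lk by simp_all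
    show "complex_of_real k1 + complex_of_real l \<noteq> 0" "complex_of_real l + complex_of_real k1 \<noteq> 0"
      unfolding of_real_add[symmetric] of_real_eq_0_iff using ne by simp_all
  qed
  have chie: "chi = oadd (osc (l + k1) (Y1 T)) (osc (- (k1 + \<beta>)) c0T)"
    using lk2 by (intro ext) (simp add: chi_def Y1_def c0T_def field_simps)
  have linchi: "chi \<in> lin_span (Chn w v T)"
    unfolding chie by (intro lin_span_add lin_span_sc lin_span_mem c1 c0C)
  have D1: "(chi, q) \<in> Dset ds M J c a C"
  proof -
    have q: "\<forall>j<J. 0 \<le> q j" "\<forall>j\<ge>J. q j = 0" using D0 by (auto simp: Dset_def)
    define y0 where "y0 = (\<lambda>m. if m < M then (\<lambda>x y. chi0 x y - zq J c a q m x y) else (\<lambda>_ _. 0))"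
    define y1 where "y1 = (\<lambda>m. if m < M then (\<lambda>x y. chi x y - zq J c a q m x y) else (\<lambda>_ _. 0))"
    have y0d: "y0 \<in> dual_cone ds M C" using D0 by (simp add: Dset_def y0_def)
    have y1e: "y1 m = oadd (y0 m) (osub chi chi0)" if "m < M" for m
      using that by (intro ext) (simp add: y0_def y1_def)
    have "y1 \<in> dual_cone ds M C"
      unfolding dual_cone_def
    proof (intro CollectI conjI allI impI ballI)
      fix m assume m: "m < M"
      have "herm ds (y0 m)" using y0d m by (simp add: dual_cone_def)
      then show "herm ds (y1 m)" unfolding y1e[OF m] by (intro herm_oadd herm_osub hchi hchi0)
    next
      fix m :: nat assume "M \<le> m" then show "y1 m = (\<lambda>_ _. 0)" by (simp add: y1_def)
    next
      fix \<Phi> assume \<Phi>: "\<Phi> \<in> C"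
      have "0 \<le> tinner ds M \<Phi> y0" using y0d \<Phi> by (simp add: dual_cone_def)
      moreover have "tinner ds M \<Phi> y1 = tinner ds M \<Phi> y0 + (\<Sum>m<M. hs ds (\<Phi> m) (osub chi chi0))"
        unfolding tinner_def by (simp add: y1e hs_add2 sum.distrib)
      moreover have "0 \<le> (\<Sum>m<M. hs ds (\<Phi> m) (osub chi chi0))"
      proof (intro sum_nonneg)
        fix m assume "m \<in> {..<M}"
        then have "psd ds (\<Phi> m)" using \<Phi> assms(13) by (auto simp: CG_def ds_def)
        then show "0 \<le> hs ds (\<Phi> m) (osub chi chi0)" by (rule psd_pairing[OF _ dpsd])
      qed
      ultimately show "0 \<le> tinner ds M \<Phi> y1" by simp
    qed
    then show ?thesis using hchi q by (simp add: Dset_def y1_def)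
  qed
  have "opt_D ds M J c a b C S (chi, q)"
    unfolding opt_D_def
  proof (intro conjI ballI)
    show "(chi, q) \<in> Dset ds M J c a C" by (rule D1)
    fix p' assume p': "p' \<in> Dset ds M J c a C"
    have "DS ds S J b chi q \<le> DS ds S J b chi0 q" using lamle by (simp add: DS_def)
    also have "\<dots> \<le> DS ds S J b (fst p') (snd p')" using opt0 p' by blast
    finally show "DS ds S J b (fst (chi, q)) (snd (chi, q)) \<le> DS ds S J b (fst p') (snd p')" by simp
  qed
  then show ?thesis using linchi unfolding ds_def by blast
qed


end
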